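(* In the setting of the Pauli-path expansion described in the context, let $k\ge0$ be an integer and let $\widetilde A_L:=\sum_{\gamma:\ r(\gamma)\le k}\mathrm{coef}(\gamma)\,Q_L(\gamma)$ be the operator obtained by discarding every Pauli path with more than $k$ non-identity updates. If $k>eL\tau$, then $$\|A_L-\widetilde A_L\|_1\;\le\;2^n\,e^{\tau L}\Big(\frac{eL\tau}{k}\Big)^{k},$$ where $\|\cdot\|_1$ is the trace norm.
   Context: Pauli-path expansion. Let $n\ge1$ and $\mathcal P_n=\{I,X,Y,Z\}^{\otimes n}$. Fix $\tau>0$, an integer $L\ge1$, and a sequence $P_1,\dots,P_L$ of Hermitian operators, each of the form $\pm P$ with $P\in\mathcal P_n\setminus\{I^{\otimes n}\}$. Define $\mathcal E_t(X)=e^{-\tau P_t/2}\,X\,e^{-\tau P_t/2}$ and $A_L:=\mathcal E_L\circ\cdots\circ\mathcal E_1(\mathbb I)$. For $Q\in\mathcal P_n$: if $P_t$ anticommutes with $Q$ then $\mathcal E_t(Q)=Q$; if $P_t$ commutes with $Q$ then $\mathcal E_t(Q)=\cosh(\tau)Q-\sinh(\tau)P_tQ$, where $P_tQ=s\,Q'$ for a unique sign $s\in\{\pm1\}$ and $Q'\in\mathcal P_n$. A Pauli path is a sequence $\gamma=(Q_0,Q_1,\dots,Q_L)$ of elements of $\mathcal P_n$ with $Q_0=\mathbb I$ such that for each $t\in\{1,\dots,L\}$ exactly one of the following holds: (a) $P_t$ anticommutes with $Q_{t-1}$ and $Q_t=Q_{t-1}$ (step factor $1$); (b) $P_t$ commutes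 with $Q_{t-1}$ and $Q_t=Q_{t-1}$ (step factor $\cosh\tau$); (c) $P_t$ commutes with $Q_{t-1}$ and $Q_t=Q'$ where $P_tQ_{t-1}=sQ'$ (step factor $-s\sinh\tau$; this is called a non-identity update). $\mathrm{coef}(\gamma)$ is the product of the $L$ step factors, $r(\gamma)$ is the number of non-identity updates, and $Q_t(\gamma)$ denotes the $t$-th entry. Then $A_L=\sum_\gamma\mathrm{coef}(\gamma)\,Q_L(\gamma)$, the sum ranging over all Pauli paths. *)

theory Defs
  imports "Jordan_Normal_Form.Schur_Decomposition" "Jordan_Normal_Form.Char_Poly"
    "HOL-Library.Multiset"
begin

datatype pauli = PI | PX | PY | PZ

fun pauli1 :: "pauli \<Rightarrow> nat \<Rightarrow> nat \<Rightarrow> complex" where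
  "pauli1 PI i j = (if i = j then 1 else 0)"
| "pauli1 PX i j = (if i \<noteq> j then 1 else 0)"
| "pauli1 PY i j = (if i = 0 \<and> j = 1 then - \<i> else if i = 1 \<and> j = 0 then \<i> else 0)"
| "pauli1 PZ i j = (if i = j then (if i = 0 then 1 else -1) else 0)"

text \<open>The 2^n x 2^n matrix of a Pauli string of length n: the tensor product
  of the single-qubit factors, qubit q being bit q of the row/column index.\<close>
definition pauli_mat :: "pauli list \<Rightarrow> complex mat" where
  "pauli_mat qs = mat (2 ^ length qs) (2 ^ length qs)
     (\<lambda>(i, j). \<Prod>q<length qs. pauli1 (qs ! q) (i div 2 ^ q mod 2) (j div 2 ^ q mod 2))"

definition signed_pauli_mat :: "real \<times> pauli list \<Rightarrow> complex mat" where
  "signed_pauli_mat sp = complex_of_real (fst sp) \<cdot>\<^sub>m pauli_mat (snd sp)"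

definition commutes :: "complex mat \<Rightarrow> complex mat \<Rightarrow> bool" where
  "commutes A B \<longleftrightarrow> A * B = B * A"

definition anticommutes :: "complex mat \<Rightarrow> complex mat \<Rightarrow> bool" where
  "anticommutes A B \<longleftrightarrow> A * B = - (B * A)"

definition mat_exp :: "complex mat \<Rightarrow> complex mat" where
  "mat_exp M = mat (dim_row M) (dim_col M)
     (\<lambda>(i, j). \<Sum>k. (M ^\<^sub>m k) $$ (i, j) / of_nat (fact k))"

definition chan :: "real \<Rightarrow> complex mat \<Rightarrow> complex mat \<Rightarrow> complex mat" where
  "chan \<tau> P X = (let E = mat_exp (complex_of_real (- \<tau> / 2) \<cdot>\<^sub>m P) in E * X * E)"

text \<open>\<open>A_L = E_L \<circ> ... \<circ> E_1 (identity)\<close>; Ps lists (P_1,...,P_L) in order.\<close>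
definition A_op :: "nat \<Rightarrow> real \<Rightarrow> (real \<times> pauli list) list \<Rightarrow> complex mat" where
  "A_op n \<tau> Ps = foldl (\<lambda>X sp. chan \<tau> (signed_pauli_mat sp) X) (1\<^sub>m (2 ^ n)) Ps"

definition nonid_step :: "complex mat \<Rightarrow> pauli list \<Rightarrow> pauli list \<Rightarrow> bool" where
  "nonid_step P Q Q' \<longleftrightarrow> commutes P (pauli_mat Q) \<and>
     (\<exists>s::real. (s = 1 \<or> s = -1) \<and> P * pauli_mat Q = complex_of_real s \<cdot>\<^sub>m pauli_mat Q')"

definition valid_step :: "complex mat \<Rightarrow> pauli list \<Rightarrow> pauli list \<Rightarrow> bool" where
  "valid_step P Q Q' \<longleftrightarrow>
     (anticommutes P (pauli_mat Q) \<and> Q' = Q)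
   \<or> (commutes P (pauli_mat Q) \<and> Q' = Q)
   \<or> nonid_step P Q Q'"

definition step_factor :: "real \<Rightarrow> complex mat \<Rightarrow> pauli list \<Rightarrow> pauli list \<Rightarrow> real" where
  "step_factor \<tau> P Q Q' =
     (if nonid_step P Q Q' then
        - (THE s::real. (s = 1 \<or> s = -1) \<and> P * pauli_mat Q = complex_of_real s \<cdot>\<^sub>m pauli_mat Q')
          * sinh \<tau>
      else if commutes P (pauli_mat Q) then cosh \<tau>
      else 1)"

text \<open>A Pauli path is represented as the list \<open>[Q_0, Q_1, ..., Q_L]\<close>.\<close>
definition pauli_paths :: "nat \<Rightarrow> (real \<times> pauli list) list \<Rightarrow> pauli list list set" where
  "pauli_paths n Ps = {\<gamma>. length \<gamma> = Suc (length Ps) \<and> (\<forall>Q\<in>set \<gamma>. length Q = n)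
      \<and> \<gamma> ! 0 = replicate n PI
      \<and> (\<forall>t\<in>{1..length Ps}. valid_step (signed_pauli_mat (Ps ! (t - 1))) (\<gamma> ! (t - 1)) (\<gamma> ! t))}"

definition path_coef :: "real \<Rightarrow> (real \<times> pauli list) list \<Rightarrow> pauli list list \<Rightarrow> real" where
  "path_coef \<tau> Ps \<gamma> = (\<Prod>t\<in>{1..length Ps}.
      step_factor \<tau> (signed_pauli_mat (Ps ! (t - 1))) (\<gamma> ! (t - 1)) (\<gamma> ! t))"

definition path_r :: "(real \<times> pauli list) list \<Rightarrow> pauli list list \<Rightarrow> nat" where
  "path_r Ps \<gamma> = card {t\<in>{1..length Ps}.
      nonid_step (signed_pauli_mat (Ps ! (t - 1))) (\<gamma> ! (t - 1)) (\<gamma> ! t)}"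

definition A_trunc :: "nat \<Rightarrow> real \<Rightarrow> (real \<times> pauli list) list \<Rightarrow> nat \<Rightarrow> complex mat" where
  "A_trunc n \<tau> Ps k = mat (2 ^ n) (2 ^ n) (\<lambda>(i, j).
      \<Sum>\<gamma>\<in>{\<gamma>\<in>pauli_paths n Ps. path_r Ps \<gamma> \<le> k}.
        complex_of_real (path_coef \<tau> Ps \<gamma>) * pauli_mat (last \<gamma>) $$ (i, j))"

text \<open>Sum of the singular values: square roots of the eigenvalues (with
  multiplicity) of \<open>A\<^sup>\<dagger> A\<close>.\<close>
definition trace_norm :: "complex mat \<Rightarrow> real" where
  "trace_norm A = sum_mset (image_mset (\<lambda>z. sqrt (Re z))
      (proots (char_poly (mat_adjoint A * A))))"

end

theory Submission
  imports Defs
begin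
fun pmul :: "pauli \<Rightarrow> pauli \<Rightarrow> pauli" where
  "pmul PI b = b"
| "pmul a PI = a"
| "pmul PX PX = PI" | "pmul PY PY = PI" | "pmul PZ PZ = PI"
| "pmul PX PY = PZ" | "pmul PY PX = PZ"
| "pmul PY PZ = PX" | "pmul PZ PY = PX"
| "pmul PZ PX = PY" | "pmul PX PZ = PY"

fun phase :: "pauli \<Rightarrow> pauli \<Rightarrow> complex" where
  "phase PX PY = \<i>" | "phase PY PX = - \<i>"
| "phase PY PZ = \<i>" | "phase PZ PY = - \<i>"
| "phase PZ PX = \<i>" | "phase PX PZ = - \<i>"
| "phase _ _ = 1"

lemma less2_cases: "(i::nat) < 2 \<Longrightarrow> i = 0 \<or> i = 1" by auto

lemma pauli1_mult:
  assumes "i < 2" "j < 2"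
  shows "pauli1 a i 0 * pauli1 b 0 j + pauli1 a i 1 * pauli1 b 1 j = phase a b * pauli1 (pmul a b) i j"
  using less2_cases[OF assms(1)] less2_cases[OF assms(2)]
  by (cases a; cases b; auto)

lemma phase_inv: "phase a b * phase b a = 1"
  by (cases a; cases b; auto)

lemma phase_same[simp]: "phase a a = 1" by (cases a; auto)
lemma pmul_same[simp]: "pmul a a = PI" by (cases a; auto)
lemma pmul_comm: "pmul a b = pmul b a" by (cases a; cases b; auto)
lemma pmul_PI_iff: "pmul a b = PI \<longleftrightarrow> a = b" by (cases a; cases b; auto)

lemma phase_vals: "phase a b \<in> {1, -1, \<i>, -\<i>}" by (cases a; cases b; auto)

lemma pauli1_trace: "pauli1 a 0 0 + pauli1 a 1 1 = (if a = PI then 2 else 0)"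
  by (cases a; auto)

lemma pauli1_conj: "i < 2 \<Longrightarrow> j < 2 \<Longrightarrow> cnj (pauli1 a j i) = pauli1 a i j"
  by (drule less2_cases, drule less2_cases, cases a; auto)

lemma pauli1_norm_le: "cmod (pauli1 a i j) \<le> 1"
  by (cases a; auto)

lemma pauli1_rownorm: "i < 2 \<Longrightarrow> cmod (pauli1 a i 0) + cmod (pauli1 a i 1) = 1"
  by (drule less2_cases, cases a; auto)

lemma bitsum:
  fixes f :: "nat \<Rightarrow> nat \<Rightarrow> 'a::comm_semiring_1"
  shows "(\<Sum>k<2^n. \<Prod>q<n. f q (k div 2^q mod 2)) = (\<Prod>q<n. f q 0 + f q 1)"
proof (induction n arbitrary: f)
  case 0
  then show ?case by simp
next
  case (Suc n)
  have split: "{..<2^Suc n} = {..<2^n} \<union> {2^n..<2^n + (2::nat)^n}" by auto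
  have A: "(\<Sum>k<2^n. \<Prod>q<Suc n. f q (k div 2^q mod 2)) = (\<Sum>k<2^n. \<Prod>q<n. f q (k div 2^q mod 2)) * f n 0"
    by (simp add: sum_distrib_right)
  have bits: "(k + 2^n) div 2^q mod 2 = k div 2^q mod 2" if qn: "q < n" for k q :: nat
  proof -
    have "(k + 2^n) div 2^q = k div 2^q + 2^(n-q)"
    proof -
      have "(2::nat)^n = 2^(n-q) * 2^q" using qn by (simp add: power_add[symmetric])
      then show ?thesis by simp
    qed
    moreover obtain d where d: "n - q = Suc d" using qn by (cases "n-q") auto
    ultimately show ?thesis by simp
  qed
  have B: "(\<Sum>k\<in>{2^n..<2^n + 2^n}. \<Prod>q<Suc n. f q (k div 2^q mod 2)) = (\<Sum>k<2^n. \<Prod>q<n. f q (k div 2^q mod 2)) * f n 1"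
  proof -
    have "(\<Sum>k\<in>{2^n..<2^n + 2^n}. \<Prod>q<Suc n. f q (k div 2^q mod 2)) = (\<Sum>k\<in>{0..<2^n}. \<Prod>q<Suc n. f q ((k+2^n) div 2^q mod 2))"
      using sum.shift_bounds_nat_ivl[of "\<lambda>k. \<Prod>q<Suc n. f q (k div 2^q mod 2)" 0 "2^n" "2^n"] by simp
    also have "\<dots> = (\<Sum>k\<in>{0..<2^n}. (\<Prod>q<n. f q (k div 2^q mod 2)) * f n 1)"
    proof (rule sum.cong[OF refl])
      fix k assume "k \<in> {0..<(2::nat)^n}"
      then have "(k + 2^n) div 2^n = 1" by auto
      then show "(\<Prod>q<Suc n. f q ((k+2^n) div 2^q mod 2)) = (\<Prod>q<n. f q (k div 2^q mod 2)) * f n 1"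
        using bits by simp
    qed
    finally show ?thesis by (simp add: sum_distrib_right atLeast0LessThan)
  qed
  have "(\<Sum>k<2^Suc n. \<Prod>q<Suc n. f q (k div 2^q mod 2)) =
     (\<Sum>k<2^n. \<Prod>q<Suc n. f q (k div 2^q mod 2)) + (\<Sum>k\<in>{2^n..<2^n + 2^n}. \<Prod>q<Suc n. f q (k div 2^q mod 2))"
    unfolding split by (subst sum.union_disjoint) auto
  also have "\<dots> = (\<Prod>q<n. f q 0 + f q 1) * (f n 0 + f n 1)"
    unfolding A B Suc by (simp add: distrib_left)
  finally show ?case by simp
qed

lemma pm_dim[simp]: "dim_row (pauli_mat Q) = 2 ^ length Q" "dim_col (pauli_mat Q) = 2 ^ length Q"
  by (auto simp: pauli_mat_def)

lemma pm_carrier[simp]: "pauli_mat Q \<in> carrier_mat (2 ^ length Q) (2 ^ length Q)"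
  by (rule carrier_matI) (simp_all add: pauli_mat_def)

lemma pm_index: "i < 2 ^ length Q \<Longrightarrow> j < 2 ^ length Q \<Longrightarrow>
   pauli_mat Q $$ (i, j) = (\<Prod>q<length Q. pauli1 (Q ! q) (i div 2 ^ q mod 2) (j div 2 ^ q mod 2))"
  by (simp add: pauli_mat_def)

lemma mult_index_sum:
  assumes "A \<in> carrier_mat nr m" "B \<in> carrier_mat m nc" "i < nr" "j < nc"
  shows "(A * B) $$ (i, j) = (\<Sum>k<m. A $$ (i, k) * B $$ (k, j))"
  using assms by (simp add: scalar_prod_def atLeast0LessThan)

lemma pm_mult:
  assumes "length R = length Q"
  shows "pauli_mat Q * pauli_mat R =
    (\<Prod>q<length Q. phase (Q ! q) (R ! q)) \<cdot>\<^sub>m pauli_mat (map2 pmul Q R)"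
proof (rule eq_matI)
  let ?n = "length Q"
  fix i j assume i: "i < dim_row ((\<Prod>q<length Q. phase (Q ! q) (R ! q)) \<cdot>\<^sub>m pauli_mat (map2 pmul Q R))"
    and j: "j < dim_col ((\<Prod>q<length Q. phase (Q ! q) (R ! q)) \<cdot>\<^sub>m pauli_mat (map2 pmul Q R))"
  then have i: "i < 2^?n" and j: "j < 2^?n" using assms by auto
  have "(pauli_mat Q * pauli_mat R) $$ (i, j) = (\<Sum>k<2^?n. pauli_mat Q $$ (i, k) * pauli_mat R $$ (k, j))"
    using i j assms by (intro mult_index_sum[of _ "2^?n" "2^?n"]) auto
  also have "\<dots> = (\<Sum>k<2^?n. \<Prod>q<?n. pauli1 (Q ! q) (i div 2 ^ q mod 2) (k div 2 ^ q mod 2)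
        * pauli1 (R ! q) (k div 2 ^ q mod 2) (j div 2 ^ q mod 2))"
    using i j assms by (intro sum.cong refl) (simp add: pm_index prod.distrib)
  also have "\<dots> = (\<Prod>q<?n. pauli1 (Q ! q) (i div 2 ^ q mod 2) 0 * pauli1 (R ! q) 0 (j div 2 ^ q mod 2)
      + pauli1 (Q ! q) (i div 2 ^ q mod 2) 1 * pauli1 (R ! q) 1 (j div 2 ^ q mod 2))"
    by (rule bitsum[where f = "\<lambda>q b. pauli1 (Q ! q) (i div 2 ^ q mod 2) b * pauli1 (R ! q) b (j div 2 ^ q mod 2)"])
  also have "\<dots> = (\<Prod>q<?n. phase (Q ! q) (R ! q) * pauli1 (pmul (Q ! q) (R ! q)) (i div 2 ^ q mod 2) (j div 2 ^ q mod 2))"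
    by (intro prod.cong refl pauli1_mult) auto
  also have "\<dots> = (\<Prod>q<length Q. phase (Q ! q) (R ! q)) * pauli_mat (map2 pmul Q R) $$ (i, j)"
    using i j assms by (simp add: pm_index prod.distrib)
  finally show "(pauli_mat Q * pauli_mat R) $$ (i, j) =
      ((\<Prod>q<length Q. phase (Q ! q) (R ! q)) \<cdot>\<^sub>m pauli_mat (map2 pmul Q R)) $$ (i, j)"
    using i j assms by simp
qed (use assms in auto)

lemma bits_eq:
  "i < 2^n \<Longrightarrow> j < 2^n \<Longrightarrow> (\<forall>q<n. i div 2^q mod 2 = j div 2^q mod 2) \<Longrightarrow> i = (j::nat)"
proof (induction n arbitrary: i j)
  case 0 then show ?case by simp
next
  case (Suc n)
  have "i div 2 = j div 2"
  proof (rule Suc.IH)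
    show "i div 2 < 2^n" "j div 2 < 2^n" using Suc.prems by auto
    show "\<forall>q<n. i div 2 div 2 ^ q mod 2 = j div 2 div 2 ^ q mod 2"
    proof (intro allI impI)
      fix q assume "q < n"
      then have "i div 2 ^ Suc q mod 2 = j div 2 ^ Suc q mod 2" using Suc.prems(3) by auto
      then show "i div 2 div 2 ^ q mod 2 = j div 2 div 2 ^ q mod 2" by (simp add: div_mult2_eq)
    qed
  qed
  moreover have "i mod 2 = j mod 2" using Suc.prems(3)[rule_format, of 0] by simp
  ultimately show ?case by (metis div_mult_mod_eq)
qed

lemma pm_replicate: "pauli_mat (replicate n PI) = 1\<^sub>m (2^n)"
proof (rule eq_matI)
  fix i j assume i: "i < dim_row (1\<^sub>m (2^n) :: complex mat)" and j: "j < dim_col (1\<^sub>m (2^n) :: complex mat)"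
  then have i: "i < 2^n" and j: "j < 2^n" by auto
  have "pauli_mat (replicate n PI) $$ (i,j) = (\<Prod>q<n. if i div 2 ^ q mod 2 = j div 2 ^ q mod 2 then 1 else 0)"
    using i j by (simp add: pm_index)
  also have "\<dots> = (if i = j then 1 else 0)"
  proof (cases "i = j")
    case True then show ?thesis by simp
  next
    case False
    then obtain q where "q < n" "i div 2 ^ q mod 2 \<noteq> j div 2 ^ q mod 2" using bits_eq[OF i j] by blast
    then have "(\<Prod>q<n. if i div 2 ^ q mod 2 = j div 2 ^ q mod 2 then 1 else (0::complex)) = 0"
      by (intro prod_zero) auto
    then show ?thesis using False by simp
  qed
  finally show "pauli_mat (replicate n PI) $$ (i,j) = 1\<^sub>m (2^n) $$ (i,j)" using i j by simp
qed auto

lemma smult_1_mat[simp]: "(1::'a::monoid_mult) \<cdot>\<^sub>m A = A" by (rule eq_matI) auto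

lemma pm_sq: "pauli_mat Q * pauli_mat Q = 1\<^sub>m (2 ^ length Q)"
proof -
  have "map2 pmul Q Q = replicate (length Q) PI"
    by (rule nth_equalityI) auto
  then show ?thesis by (simp add: pm_mult pm_replicate)
qed

definition mtr :: "complex mat \<Rightarrow> complex" where
  "mtr A = (\<Sum>i<dim_row A. A $$ (i,i))"

lemma pm_trace: "mtr (pauli_mat Q) = (if Q = replicate (length Q) PI then 2 ^ length Q else 0)"
proof -
  let ?n = "length Q"
  have "mtr (pauli_mat Q) = (\<Sum>i<2^?n. \<Prod>q<?n. pauli1 (Q ! q) (i div 2 ^ q mod 2) (i div 2 ^ q mod 2))"
    by (simp add: mtr_def pm_index)
  also have "\<dots> = (\<Prod>q<?n. pauli1 (Q ! q) 0 0 + pauli1 (Q ! q) 1 1)"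
    by (rule bitsum[where f = "\<lambda>q b. pauli1 (Q ! q) b b"])
  also have "\<dots> = (\<Prod>q<?n. if Q ! q = PI then 2 else 0)"
    by (intro prod.cong refl) (rule pauli1_trace)
  also have "\<dots> = (if Q = replicate (length Q) PI then 2 ^ length Q else 0)"
  proof (cases "Q = replicate (length Q) PI")
    case True
    then have "\<forall>q<?n. Q ! q = PI" by (metis nth_replicate)
    then show ?thesis using True by simp
  next
    case False
    then obtain q where "q < ?n" "Q ! q \<noteq> PI"
      by (metis (mono_tags, lifting) length_replicate nth_equalityI nth_replicate)
    then have "(\<Prod>q<?n. if Q ! q = PI then 2 else (0::complex)) = 0" by (intro prod_zero) auto
    then show ?thesis using False by simp
  qed
  finally show ?thesis .
qed

lemma pm_rowsum:
  assumes "i < 2 ^ length Q"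
  shows "(\<Sum>j<2 ^ length Q. cmod (pauli_mat Q $$ (i, j))) = 1"
proof -
  let ?n = "length Q"
  have "(\<Sum>j<2 ^ ?n. cmod (pauli_mat Q $$ (i, j))) =
      (\<Sum>j<2^?n. \<Prod>q<?n. cmod (pauli1 (Q ! q) (i div 2 ^ q mod 2) (j div 2 ^ q mod 2)))"
    using assms by (intro sum.cong refl) (simp add: pm_index prod_norm)
  also have "\<dots> = (\<Prod>q<?n. cmod (pauli1 (Q ! q) (i div 2 ^ q mod 2) 0) + cmod (pauli1 (Q ! q) (i div 2 ^ q mod 2) 1))"
    by (rule bitsum[where f = "\<lambda>q b. cmod (pauli1 (Q ! q) (i div 2 ^ q mod 2) b)"])
  also have "\<dots> = 1" by (intro prod.neutral ballI) (rule pauli1_rownorm; simp)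
  finally show ?thesis .
qed

lemma pm_entry_le:
  assumes "i < 2 ^ length Q" "j < 2 ^ length Q"
  shows "cmod (pauli_mat Q $$ (i, j)) \<le> 1"
  using assms by (simp add: pm_index prod_norm[symmetric] prod_le_1 pauli1_norm_le)

lemma smult_cancel:
  assumes X: "X \<in> carrier_mat N N" and sq: "X * X = 1\<^sub>m N" and N: "0 < N"
    and eq: "a \<cdot>\<^sub>m X = b \<cdot>\<^sub>m X"
  shows "a = (b::complex)"
proof -
  have "(a \<cdot>\<^sub>m X) * X = (b \<cdot>\<^sub>m X) * X" using eq by simp
  then have "a \<cdot>\<^sub>m (X * X) = b \<cdot>\<^sub>m (X * X)" using X by (simp add: mult_smult_assoc_mat)
  then have "(a \<cdot>\<^sub>m 1\<^sub>m N) $$ (0,0) = (b \<cdot>\<^sub>m 1\<^sub>m N) $$ (0,0)" using sq by simp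
  then show ?thesis using N by simp
qed

lemma pm_ne0: "pauli_mat Q * pauli_mat Q = 1\<^sub>m (2 ^ length Q)" by (rule pm_sq)

lemma pm_smult_cancel:
  "a \<cdot>\<^sub>m pauli_mat Q = b \<cdot>\<^sub>m pauli_mat Q \<Longrightarrow> a = b"
  by (rule smult_cancel[OF pm_carrier pm_sq]) auto

lemma unit_pm1: "x * y = 1 \<Longrightarrow> x = 1 \<or> x = -1 \<Longrightarrow> y = (x::complex)"
  by (auto simp: minus_equation_iff[of y])
lemma unit_pmi: "x * y = 1 \<Longrightarrow> x = \<i> \<or> x = -\<i> \<Longrightarrow> y = - (x::complex)"
proof -
  assume a: "x * y = 1" "x = \<i> \<or> x = -\<i>"
  then have "x * x = -1" by auto
  then have "y = - (x * x) * y" by simp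
  also have "\<dots> = - x" using a(1) by (simp add: mult.assoc)
  finally show ?thesis .
qed

lemma nz_aux: "(x::complex) * y = 0 \<Longrightarrow> x \<noteq> 0 \<Longrightarrow> y = 1 \<or> y = -1 \<Longrightarrow> False" by auto

lemma nz_aux2: "(x::complex) * y = 0 \<Longrightarrow> x \<noteq> 0 \<Longrightarrow> y = \<i> \<or> y = -\<i> \<Longrightarrow> False" by auto

definition G4 :: "complex set" where "G4 = {1, -1, \<i>, -\<i>}"

lemma G4_mult: "x \<in> G4 \<Longrightarrow> y \<in> G4 \<Longrightarrow> x * y \<in> G4"
  by (auto simp: G4_def)

lemma prod_phase_G4: "finite A \<Longrightarrow> (\<Prod>q\<in>A. phase (f q) (g q)) \<in> G4"
proof (induction A rule: finite_induct)
  case empty then show ?case by (simp add: G4_def)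
next
  case (insert x F)
  then show ?case using G4_mult phase_vals[of "f x" "g x"] by (simp add: G4_def)
qed

lemma prod_phase_inv: "(\<Prod>q\<in>A. phase (f q) (g q)) * (\<Prod>q\<in>A. phase (g q) (f q)) = 1"
  by (simp add: prod.distrib[symmetric] phase_inv)

lemma mtr_smult: "A \<in> carrier_mat N N \<Longrightarrow> mtr (a \<cdot>\<^sub>m A) = a * mtr A"
  by (simp add: mtr_def sum_distrib_left)

lemma mtr_one: "mtr (1\<^sub>m N) = of_nat N"
  by (simp add: mtr_def)

lemma smult_mult_smult:
  assumes "A \<in> carrier_mat n m" "B \<in> carrier_mat m k"
  shows "(a \<cdot>\<^sub>m A) * (b \<cdot>\<^sub>m B) = (a * b) \<cdot>\<^sub>m (A * (B::complex mat))"
proof -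
  have "(a \<cdot>\<^sub>m A) * (b \<cdot>\<^sub>m B) = a \<cdot>\<^sub>m (A * (b \<cdot>\<^sub>m B))" using assms by (intro mult_smult_assoc_mat) auto
  also have "\<dots> = a \<cdot>\<^sub>m (b \<cdot>\<^sub>m (A*B))" using assms by (simp add: mult_smult_distrib)
  also have "\<dots> = (a*b) \<cdot>\<^sub>m (A*B)" by (rule eq_matI) auto
  finally show ?thesis .
qed

lemma pm_smult_mult_left:
  assumes "length R = length Q"
  shows "(a \<cdot>\<^sub>m pauli_mat Q) * pauli_mat R = (a * (\<Prod>q<length Q. phase (Q ! q) (R ! q))) \<cdot>\<^sub>m pauli_mat (map2 pmul Q R)"
proof -
  have R: "pauli_mat R \<in> carrier_mat (2^length Q) (2^length Q)" using assms pm_carrier by metis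
  have "(a \<cdot>\<^sub>m pauli_mat Q) * pauli_mat R = (a \<cdot>\<^sub>m pauli_mat Q) * (1 \<cdot>\<^sub>m pauli_mat R)" by simp
  also have "\<dots> = (a * 1) \<cdot>\<^sub>m (pauli_mat Q * pauli_mat R)"
    by (rule smult_mult_smult[OF pm_carrier[of Q] R])
  also have "\<dots> = (a * (\<Prod>q<length Q. phase (Q ! q) (R ! q))) \<cdot>\<^sub>m pauli_mat (map2 pmul Q R)"
    using assms by (simp add: pm_mult) (rule eq_matI, auto)
  finally show ?thesis .
qed

lemma pm_smult_mult_right:
  assumes "length R = length Q"
  shows "pauli_mat Q * (a \<cdot>\<^sub>m pauli_mat R) = (a * (\<Prod>q<length Q. phase (Q ! q) (R ! q))) \<cdot>\<^sub>m pauli_mat (map2 pmul Q R)"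
proof -
  have R: "pauli_mat R \<in> carrier_mat (2^length Q) (2^length Q)" using assms pm_carrier by metis
  have "pauli_mat Q * (a \<cdot>\<^sub>m pauli_mat R) = (1 \<cdot>\<^sub>m pauli_mat Q) * (a \<cdot>\<^sub>m pauli_mat R)" by simp
  also have "\<dots> = (1 * a) \<cdot>\<^sub>m (pauli_mat Q * pauli_mat R)"
    by (rule smult_mult_smult[OF pm_carrier[of Q] R])
  also have "\<dots> = (a * (\<Prod>q<length Q. phase (Q ! q) (R ! q))) \<cdot>\<^sub>m pauli_mat (map2 pmul Q R)"
    using assms by (simp add: pm_mult) (rule eq_matI, auto)
  finally show ?thesis .
qed

lemma pm_smult_inj:
  assumes len: "length Q1 = length Q2" and s1: "s1 \<noteq> 0"
    and eq: "s1 \<cdot>\<^sub>m pauli_mat Q1 = s2 \<cdot>\<^sub>m pauli_mat Q2"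
  shows "Q1 = Q2 \<and> s1 = s2"
proof -
  let ?n = "length Q1"
  let ?c = "\<Prod>q<?n. phase (Q1 ! q) (Q2 ! q)"
  let ?W = "map2 pmul Q1 Q2"
  have "pauli_mat Q1 * (s1 \<cdot>\<^sub>m pauli_mat Q1) = pauli_mat Q1 * (s2 \<cdot>\<^sub>m pauli_mat Q2)" using eq by simp
  then have "s1 \<cdot>\<^sub>m (pauli_mat Q1 * pauli_mat Q1) = s2 \<cdot>\<^sub>m (pauli_mat Q1 * pauli_mat Q2)"
    using len by (metis mult_smult_distrib pm_carrier)
  then have e: "s1 \<cdot>\<^sub>m 1\<^sub>m (2^?n) = s2 \<cdot>\<^sub>m (?c \<cdot>\<^sub>m pauli_mat ?W)"
    using len by (simp add: pm_sq pm_mult)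
  have "mtr (s1 \<cdot>\<^sub>m 1\<^sub>m (2^?n)) = s1 * 2^?n" by (simp add: mtr_smult[of _ "2^?n"] mtr_one)
  moreover have "mtr (s2 \<cdot>\<^sub>m (?c \<cdot>\<^sub>m pauli_mat ?W)) = s2 * ?c * mtr (pauli_mat ?W)"
    using mtr_smult[OF pm_carrier[of ?W]] mtr_smult[OF smult_carrier_mat[OF pm_carrier[of ?W]]] by simp
  ultimately have "s1 * 2^?n = s2 * ?c * mtr (pauli_mat ?W)" using e by simp
  then have "mtr (pauli_mat ?W) \<noteq> 0" using s1 by auto
  then have W: "?W = replicate (length ?W) PI" using pm_trace[of ?W] by (auto split: if_splits)
  have "pmul (Q1 ! q) (Q2 ! q) = PI" if q: "q < ?n" for q
  proof -
    have "?W ! q = (replicate (length ?W) PI) ! q" using arg_cong[where f="\<lambda>l. l ! q", OF W] .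
    then show ?thesis using q len by simp
  qed
  then have QQ: "Q1 = Q2" using len by (intro nth_equalityI) (auto simp: pmul_PI_iff)
  have "s1 = s2" using eq unfolding QQ by (rule pm_smult_cancel)
  with QQ show ?thesis by simp
qed

lemma uminus_smult_mat: "- (a \<cdot>\<^sub>m A) = (- a) \<cdot>\<^sub>m (A :: complex mat)"
  by (rule eq_matI) auto

lemma signed_carrier[simp]: "signed_pauli_mat sp \<in> carrier_mat (2 ^ length (snd sp)) (2 ^ length (snd sp))"
  unfolding signed_pauli_mat_def by (rule smult_carrier_mat[OF pm_carrier])

lemma signed_sq:
  assumes "fst sp = 1 \<or> fst sp = -1"
  shows "signed_pauli_mat sp * signed_pauli_mat sp = 1\<^sub>m (2 ^ length (snd sp))"
proof -
  let ?s = "complex_of_real (fst sp)" and ?P = "pauli_mat (snd sp)"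
  have "(?s \<cdot>\<^sub>m ?P) * (?s \<cdot>\<^sub>m ?P) = (?s * ?s) \<cdot>\<^sub>m (?P * ?P)"
    by (rule smult_mult_smult[OF pm_carrier pm_carrier])
  also have "?s * ?s = 1" using assms by auto
  finally show ?thesis by (simp add: signed_pauli_mat_def pm_sq)
qed

lemma step_cases:
  assumes sp: "fst sp = 1 \<or> fst sp = -1" and len: "length (snd sp) = length Q"
  shows "(commutes (signed_pauli_mat sp) (pauli_mat Q) \<and> \<not> anticommutes (signed_pauli_mat sp) (pauli_mat Q)
      \<and> (\<exists>s::real. (s = 1 \<or> s = -1) \<and> signed_pauli_mat sp * pauli_mat Q = complex_of_real s \<cdot>\<^sub>m pauli_mat (map2 pmul (snd sp) Q)))
    \<or> (anticommutes (signed_pauli_mat sp) (pauli_mat Q) \<and> \<not> commutes (signed_pauli_mat sp) (pauli_mat Q))"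
proof -
  let ?S = "snd sp" and ?n = "length Q"
  let ?s0 = "complex_of_real (fst sp)"
  let ?c = "\<Prod>q<?n. phase (?S ! q) (Q ! q)"
  let ?c' = "\<Prod>q<?n. phase (Q ! q) (?S ! q)"
  let ?W = "map2 pmul ?S Q"
  have W': "map2 pmul Q ?S = ?W" using len by (intro nth_equalityI) (auto simp: pmul_comm)
  have PQ: "signed_pauli_mat sp * pauli_mat Q = (?s0 * ?c) \<cdot>\<^sub>m pauli_mat ?W"
    using len by (simp add: signed_pauli_mat_def pm_smult_mult_left)
  have QP: "pauli_mat Q * signed_pauli_mat sp = (?s0 * ?c') \<cdot>\<^sub>m pauli_mat ?W"
    using len W' by (simp add: signed_pauli_mat_def pm_smult_mult_right mult.commute)
  have cc: "?c * ?c' = 1" by (rule prod_phase_inv)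
  have s0: "?s0 \<noteq> 0" using sp by auto
  have cG: "?c \<in> G4" by (rule prod_phase_G4) simp
  show ?thesis
  proof (cases "?c = 1 \<or> ?c = -1")
    case True
    then have c': "?c' = ?c" using cc unit_pm1 by blast
    have comm: "commutes (signed_pauli_mat sp) (pauli_mat Q)"
      unfolding commutes_def PQ QP c' ..
    have nanti: "\<not> anticommutes (signed_pauli_mat sp) (pauli_mat Q)"
    proof
      assume "anticommutes (signed_pauli_mat sp) (pauli_mat Q)"
      then have "(?s0 * ?c) \<cdot>\<^sub>m pauli_mat ?W = (- (?s0 * ?c)) \<cdot>\<^sub>m pauli_mat ?W"
        unfolding anticommutes_def PQ QP c' uminus_smult_mat .
      then have "?s0 * ?c = - (?s0 * ?c)" by (rule pm_smult_cancel)
      then have "?s0 * ?c + ?s0 * ?c = 0" by (metis add.right_inverse)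
      then have "?s0 * ?c = 0" by simp
      then show False using s0 True nz_aux by blast
    qed
    have "\<exists>s::real. (s = 1 \<or> s = -1) \<and> signed_pauli_mat sp * pauli_mat Q = complex_of_real s \<cdot>\<^sub>m pauli_mat ?W"
    proof (intro exI conjI)
      show "fst sp * (if ?c = 1 then 1 else -1) = 1 \<or> fst sp * (if ?c = 1 then 1 else -1) = -1"
        using sp by auto
      show "signed_pauli_mat sp * pauli_mat Q = complex_of_real (fst sp * (if ?c = 1 then 1 else -1)) \<cdot>\<^sub>m pauli_mat ?W"
        unfolding PQ using True by auto
    qed
    then show ?thesis using comm nanti by blast
  next
    case False
    then have ci: "?c = \<i> \<or> ?c = - \<i>" using cG by (auto simp: G4_def)
    then have c': "?c' = - ?c" using cc unit_pmi by blast
    have anti: "anticommutes (signed_pauli_mat sp) (pauli_mat Q)"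
      unfolding anticommutes_def PQ QP c' uminus_smult_mat by simp
    have ncomm: "\<not> commutes (signed_pauli_mat sp) (pauli_mat Q)"
    proof
      assume "commutes (signed_pauli_mat sp) (pauli_mat Q)"
      then have "(?s0 * ?c) \<cdot>\<^sub>m pauli_mat ?W = (- (?s0 * ?c)) \<cdot>\<^sub>m pauli_mat ?W"
        unfolding commutes_def PQ QP c' by simp
      then have "?s0 * ?c = - (?s0 * ?c)" by (rule pm_smult_cancel)
      then have "?s0 * ?c + ?s0 * ?c = 0" by (metis add.right_inverse)
      then have "?s0 * ?c = 0" by simp
      then show False using s0 ci nz_aux2 by blast
    qed
    show ?thesis using anti ncomm by blast
  qed
qed

lemma pow_smult_invol:
  assumes P: "P \<in> carrier_mat N N" and sq: "P * P = 1\<^sub>m N"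
  shows "(b \<cdot>\<^sub>m P) ^\<^sub>m k = b ^ k \<cdot>\<^sub>m (if even k then 1\<^sub>m N else (P :: complex mat))"
proof (induction k)
  case 0
  then show ?case using P by simp
next
  case (Suc k)
  have X: "(if even k then 1\<^sub>m N else P) \<in> carrier_mat N N" using P by simp
  have "(b \<cdot>\<^sub>m P) ^\<^sub>m Suc k = (b ^ k \<cdot>\<^sub>m (if even k then 1\<^sub>m N else P)) * (b \<cdot>\<^sub>m P)"
    using Suc by simp
  also have "\<dots> = (b ^ k * b) \<cdot>\<^sub>m ((if even k then 1\<^sub>m N else P) * P)"
    by (rule smult_mult_smult[OF X P])
  also have "\<dots> = b ^ Suc k \<cdot>\<^sub>m (if even (Suc k) then 1\<^sub>m N else P)"
    using P sq by (cases "even k") (auto simp: mult.commute)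
  finally show ?case .
qed

lemma mat_exp_invol:
  assumes P: "P \<in> carrier_mat N N" and sq: "P * P = 1\<^sub>m N"
  shows "mat_exp (complex_of_real a \<cdot>\<^sub>m P) =
     complex_of_real (cosh a) \<cdot>\<^sub>m 1\<^sub>m N + complex_of_real (sinh a) \<cdot>\<^sub>m P"
proof (rule eq_matI)
  fix i j assume "i < dim_row (complex_of_real (cosh a) \<cdot>\<^sub>m 1\<^sub>m N + complex_of_real (sinh a) \<cdot>\<^sub>m P)"
    "j < dim_col (complex_of_real (cosh a) \<cdot>\<^sub>m 1\<^sub>m N + complex_of_real (sinh a) \<cdot>\<^sub>m P)"
  then have i: "i < N" and j: "j < N" using P by auto
  let ?d = "(1\<^sub>m N :: complex mat) $$ (i,j)" and ?p = "P $$ (i,j)"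
  have tm: "((complex_of_real a \<cdot>\<^sub>m P) ^\<^sub>m k) $$ (i, j) / of_nat (fact k) =
     complex_of_real (if even k then a ^ k / fact k else 0) * ?d + complex_of_real (if even k then 0 else a ^ k / fact k) * ?p" for k
    using i j P unfolding pow_smult_invol[OF P sq] by (auto simp: of_real_power)
  have c: "(\<lambda>k. complex_of_real (if even k then a ^ k / fact k else 0)) sums complex_of_real (cosh a)"
  proof -
    have eqcosh: "(\<lambda>n. if even n then a ^ n /\<^sub>R fact n else 0) = (\<lambda>k. if even k then a ^ k / fact k else 0)"
      by (rule ext) (simp add: scaleR_conv_of_real divide_inverse mult.commute)
    have "(\<lambda>k. if even k then a ^ k / fact k else 0) sums cosh a"
      using cosh_converges[of a] unfolding eqcosh .
    from sums_of_real[where 'a=complex, OF this] show ?thesis by simp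
  qed
  have s: "(\<lambda>k. complex_of_real (if even k then 0 else a ^ k / fact k)) sums complex_of_real (sinh a)"
  proof -
    have eqsinh: "(\<lambda>n. if even n then 0 else a ^ n /\<^sub>R fact n) = (\<lambda>k. if even k then 0 else a ^ k / fact k)"
      by (rule ext) (simp add: scaleR_conv_of_real divide_inverse mult.commute)
    have "(\<lambda>k. if even k then 0 else a ^ k / fact k) sums sinh a"
      using sinh_converges[of a] unfolding eqsinh .
    from sums_of_real[where 'a=complex, OF this] show ?thesis by simp
  qed
  have "(\<lambda>k. ((complex_of_real a \<cdot>\<^sub>m P) ^\<^sub>m k) $$ (i, j) / of_nat (fact k)) sums
      (complex_of_real (cosh a) * ?d + complex_of_real (sinh a) * ?p)"
    unfolding tm by (intro sums_add sums_mult2 c s)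
  then have "mat_exp (complex_of_real a \<cdot>\<^sub>m P) $$ (i,j) = complex_of_real (cosh a) * ?d + complex_of_real (sinh a) * ?p"
    using i j P by (simp add: mat_exp_def sums_iff)
  then show "mat_exp (complex_of_real a \<cdot>\<^sub>m P) $$ (i,j) =
     (complex_of_real (cosh a) \<cdot>\<^sub>m 1\<^sub>m N + complex_of_real (sinh a) \<cdot>\<^sub>m P) $$ (i,j)"
    using i j P by simp
qed (use P in \<open>auto simp: mat_exp_def\<close>)

lemma lin_left:
  assumes P: "P \<in> carrier_mat N N" and X: "X \<in> carrier_mat N N"
  shows "(c \<cdot>\<^sub>m 1\<^sub>m N + d \<cdot>\<^sub>m P) * X = c \<cdot>\<^sub>m X + d \<cdot>\<^sub>m (P * (X :: complex mat))"
proof -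
  have "(c \<cdot>\<^sub>m 1\<^sub>m N + d \<cdot>\<^sub>m P) * X = (c \<cdot>\<^sub>m 1\<^sub>m N) * X + (d \<cdot>\<^sub>m P) * X"
    using P X by (intro add_mult_distrib_mat[of _ N N]) auto
  also have "\<dots> = c \<cdot>\<^sub>m X + d \<cdot>\<^sub>m (P * X)"
    using P X by (simp add: mult_smult_assoc_mat[of _ N N])
  finally show ?thesis .
qed

lemma lin_right:
  assumes P: "P \<in> carrier_mat N N" and X: "X \<in> carrier_mat N N"
  shows "X * (c \<cdot>\<^sub>m 1\<^sub>m N + d \<cdot>\<^sub>m P) = c \<cdot>\<^sub>m X + d \<cdot>\<^sub>m (X * (P :: complex mat))"
proof -
  have "X * (c \<cdot>\<^sub>m 1\<^sub>m N + d \<cdot>\<^sub>m P) = X * (c \<cdot>\<^sub>m 1\<^sub>m N) + X * (d \<cdot>\<^sub>m P)"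
    using P X by (intro mult_add_distrib_mat[of _ N N]) auto
  also have "\<dots> = c \<cdot>\<^sub>m X + d \<cdot>\<^sub>m (X * P)"
    using P X by (simp add: mult_smult_distrib[of _ N N] mult_smult_distrib[OF X one_carrier_mat])
  finally show ?thesis .
qed

lemma sandwich:
  assumes P: "P \<in> carrier_mat N N" and X: "X \<in> carrier_mat N N"
  shows "(c \<cdot>\<^sub>m 1\<^sub>m N + d \<cdot>\<^sub>m P) * X * (c \<cdot>\<^sub>m 1\<^sub>m N + d \<cdot>\<^sub>m P) =
    c \<cdot>\<^sub>m (c \<cdot>\<^sub>m X + d \<cdot>\<^sub>m (P * X)) + d \<cdot>\<^sub>m (c \<cdot>\<^sub>m (X * P) + d \<cdot>\<^sub>m ((P * X) * (P :: complex mat)))"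
proof -
  have Y: "c \<cdot>\<^sub>m X + d \<cdot>\<^sub>m (P * X) \<in> carrier_mat N N" using P X by auto
  have "(c \<cdot>\<^sub>m X + d \<cdot>\<^sub>m (P * X)) * P = (c \<cdot>\<^sub>m X) * P + (d \<cdot>\<^sub>m (P * X)) * P"
    using P X by (intro add_mult_distrib_mat[of _ N N]) auto
  also have "\<dots> = c \<cdot>\<^sub>m (X * P) + d \<cdot>\<^sub>m ((P * X) * P)"
    using P X by (simp add: mult_smult_assoc_mat[of _ N N])
  finally have Z: "(c \<cdot>\<^sub>m X + d \<cdot>\<^sub>m (P * X)) * P = c \<cdot>\<^sub>m (X * P) + d \<cdot>\<^sub>m ((P * X) * P)" .
  show ?thesis
    unfolding lin_left[OF P X] lin_right[OF P Y] Z ..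
qed

lemma chan_comm:
  assumes P: "P \<in> carrier_mat N N" and sq: "P * P = 1\<^sub>m N" and X: "X \<in> carrier_mat N N"
    and comm: "P * X = X * P"
  shows "chan \<tau> P X = complex_of_real (cosh \<tau>) \<cdot>\<^sub>m X + complex_of_real (- sinh \<tau>) \<cdot>\<^sub>m (P * X)"
proof -
  let ?c = "complex_of_real (cosh (- \<tau> / 2))" and ?d = "complex_of_real (sinh (- \<tau> / 2))"
  have PXP: "(P * X) * P = X"
  proof -
    have "(P * X) * P = P * (X * P)" using P X by (simp add: assoc_mult_mat[of _ N N])
    also have "\<dots> = P * (P * X)" using comm by simp
    also have "\<dots> = (P * P) * X" using P X by (simp add: assoc_mult_mat[of _ N N])
    finally show ?thesis using sq X by simp
  qed
  have e: "chan \<tau> P X = ?c \<cdot>\<^sub>m (?c \<cdot>\<^sub>m X + ?d \<cdot>\<^sub>m (P * X)) + ?d \<cdot>\<^sub>m (?c \<cdot>\<^sub>m (X * P) + ?d \<cdot>\<^sub>m ((P * X) * P))"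
    unfolding chan_def Let_def mat_exp_invol[OF P sq] by (rule sandwich[OF P X])
  have h1: "cosh \<tau> = cosh (\<tau>/2) ^ 2 + sinh (\<tau>/2) ^ 2" using cosh_double[of "\<tau>/2"] by simp
  have h2: "sinh \<tau> = 2 * sinh (\<tau>/2) * cosh (\<tau>/2)" using sinh_double[of "\<tau>/2"] by simp
  show ?thesis
    unfolding e PXP comm[symmetric]
    using P X by (intro eq_matI) (auto simp: h1 h2 algebra_simps power2_eq_square)
qed

lemma chan_anti:
  assumes P: "P \<in> carrier_mat N N" and sq: "P * P = 1\<^sub>m N" and X: "X \<in> carrier_mat N N"
    and anti: "P * X = - (X * P)"
  shows "chan \<tau> P X = X"
proof -
  let ?c = "complex_of_real (cosh (- \<tau> / 2))" and ?d = "complex_of_real (sinh (- \<tau> / 2))"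
  have XP: "X * P = - (P * X)" using anti by simp
  have PXP: "(P * X) * P = - X"
  proof -
    have "(P * X) * P = P * (X * P)" using P X by (simp add: assoc_mult_mat[of _ N N])
    also have "\<dots> = P * (- (P * X))" using XP by simp
    also have "\<dots> = - ((P * P) * X)" using P X by (simp add: assoc_mult_mat[of _ N N])
    finally show ?thesis using sq X by simp
  qed
  have e: "chan \<tau> P X = ?c \<cdot>\<^sub>m (?c \<cdot>\<^sub>m X + ?d \<cdot>\<^sub>m (P * X)) + ?d \<cdot>\<^sub>m (?c \<cdot>\<^sub>m (X * P) + ?d \<cdot>\<^sub>m ((P * X) * P))"
    unfolding chan_def Let_def mat_exp_invol[OF P sq] by (rule sandwich[OF P X])
  have h: "cosh (\<tau>/2) ^ 2 - sinh (\<tau>/2) ^ 2 = 1" by (rule hyperbolic_pythagoras)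
  have h': "complex_of_real (cosh (\<tau>/2)) * complex_of_real (cosh (\<tau>/2)) - complex_of_real (sinh (\<tau>/2)) * complex_of_real (sinh (\<tau>/2)) = 1"
    using arg_cong[OF h, of complex_of_real] by (simp add: power2_eq_square)
  show ?thesis
    unfolding e PXP XP
    using P X h' by (intro eq_matI) (auto simp: algebra_simps)
qed

definition msum :: "nat \<Rightarrow> 'b set \<Rightarrow> ('b \<Rightarrow> complex mat) \<Rightarrow> complex mat" where
  "msum N S F = mat N N (\<lambda>(i,j). \<Sum>x\<in>S. F x $$ (i,j))"

lemma msum_carrier[simp]: "msum N S F \<in> carrier_mat N N"
  by (simp add: msum_def)

lemma msum_mult_left:
  assumes A: "A \<in> carrier_mat N N" and F: "\<And>x. x \<in> S \<Longrightarrow> F x \<in> carrier_mat N N"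
  shows "A * msum N S F = msum N S (\<lambda>x. A * F x)"
proof (rule eq_matI)
  fix i j assume "i < dim_row (msum N S (\<lambda>x. A * F x))" "j < dim_col (msum N S (\<lambda>x. A * F x))"
  then have i: "i < N" and j: "j < N" by (auto simp: msum_def)
  have "(A * msum N S F) $$ (i,j) = (\<Sum>k<N. A $$ (i,k) * msum N S F $$ (k,j))"
    using A i j by (intro mult_index_sum[of _ N N _ N]) auto
  also have "\<dots> = (\<Sum>k<N. \<Sum>x\<in>S. A $$ (i,k) * F x $$ (k,j))"
    using j by (simp add: msum_def sum_distrib_left)
  also have "\<dots> = (\<Sum>x\<in>S. \<Sum>k<N. A $$ (i,k) * F x $$ (k,j))" by (rule sum.swap)
  also have "\<dots> = (\<Sum>x\<in>S. (A * F x) $$ (i,j))"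
    using A F i j by (intro sum.cong refl mult_index_sum[of _ N N _ N, symmetric]) auto
  finally show "(A * msum N S F) $$ (i,j) = msum N S (\<lambda>x. A * F x) $$ (i,j)" using i j by (simp add: msum_def)
qed (use A in \<open>auto simp: msum_def\<close>)

lemma msum_mult_right:
  assumes A: "A \<in> carrier_mat N N" and F: "\<And>x. x \<in> S \<Longrightarrow> F x \<in> carrier_mat N N"
  shows "msum N S F * A = msum N S (\<lambda>x. F x * A)"
proof (rule eq_matI)
  fix i j assume "i < dim_row (msum N S (\<lambda>x. F x * A))" "j < dim_col (msum N S (\<lambda>x. F x * A))"
  then have i: "i < N" and j: "j < N" by (auto simp: msum_def)
  have "(msum N S F * A) $$ (i,j) = (\<Sum>k<N. msum N S F $$ (i,k) * A $$ (k,j))"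
    using A i j by (intro mult_index_sum[of _ N N _ N]) auto
  also have "\<dots> = (\<Sum>k<N. \<Sum>x\<in>S. F x $$ (i,k) * A $$ (k,j))"
    using i by (simp add: msum_def sum_distrib_right)
  also have "\<dots> = (\<Sum>x\<in>S. \<Sum>k<N. F x $$ (i,k) * A $$ (k,j))" by (rule sum.swap)
  also have "\<dots> = (\<Sum>x\<in>S. (F x * A) $$ (i,j))"
    using A F i j by (intro sum.cong refl mult_index_sum[of _ N N _ N, symmetric]) auto
  finally show "(msum N S F * A) $$ (i,j) = msum N S (\<lambda>x. F x * A) $$ (i,j)" using i j by (simp add: msum_def)
qed (use A in \<open>auto simp: msum_def\<close>)

lemma mat_exp_carrier: "M \<in> carrier_mat N N \<Longrightarrow> mat_exp M \<in> carrier_mat N N"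
  by (simp add: mat_exp_def)

lemma chan_msum:
  assumes P: "P \<in> carrier_mat N N" and F: "\<And>x. x \<in> S \<Longrightarrow> F x \<in> carrier_mat N N"
  shows "chan \<tau> P (msum N S F) = msum N S (\<lambda>x. chan \<tau> P (F x))"
proof -
  let ?E = "mat_exp (complex_of_real (- \<tau> / 2) \<cdot>\<^sub>m P)"
  have E: "?E \<in> carrier_mat N N" using P by (intro mat_exp_carrier) simp
  have "?E * msum N S F * ?E = msum N S (\<lambda>x. ?E * F x) * ?E"
    by (rule arg_cong[where f="\<lambda>A. A * ?E"], rule msum_mult_left[OF E F])
  also have "\<dots> = msum N S (\<lambda>x. ?E * F x * ?E)"
    using E F by (intro msum_mult_right) auto
  finally show ?thesis by (simp add: chan_def Let_def)
qed

lemma chan_smult: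
  assumes P: "P \<in> carrier_mat N N" and X: "X \<in> carrier_mat N N"
  shows "chan \<tau> P (a \<cdot>\<^sub>m X) = a \<cdot>\<^sub>m chan \<tau> P X"
proof -
  let ?E = "mat_exp (complex_of_real (- \<tau> / 2) \<cdot>\<^sub>m P)"
  have E: "?E \<in> carrier_mat N N" using P by (intro mat_exp_carrier) simp
  have "?E * (a \<cdot>\<^sub>m X) * ?E = a \<cdot>\<^sub>m (?E * X * ?E)"
    using E X by (simp add: mult_smult_distrib[of _ N N] mult_smult_assoc_mat[of _ N N])
  then show ?thesis by (simp add: chan_def Let_def)
qed

lemma chan_carrier:
  assumes P: "P \<in> carrier_mat N N" and X: "X \<in> carrier_mat N N"
  shows "chan \<tau> P X \<in> carrier_mat N N"
proof -
  have E: "mat_exp (complex_of_real (- \<tau> / 2) \<cdot>\<^sub>m P) \<in> carrier_mat N N" using P by (intro mat_exp_carrier) simp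
  then show ?thesis using X by (simp add: chan_def Let_def)
qed

definition okPs :: "nat \<Rightarrow> (real \<times> pauli list) list \<Rightarrow> bool" where
  "okPs n Ps \<longleftrightarrow> (\<forall>sp\<in>set Ps. (fst sp = 1 \<or> fst sp = -1) \<and> length (snd sp) = n \<and> snd sp \<noteq> replicate n PI)"

definition Vs :: "nat \<Rightarrow> complex mat \<Rightarrow> pauli list \<Rightarrow> pauli list set" where
  "Vs n P Q = {Q'. length Q' = n \<and> valid_step P Q Q'}"

lemma smult_smult_mat': "a \<cdot>\<^sub>m (b \<cdot>\<^sub>m A) = (a * b) \<cdot>\<^sub>m (A :: complex mat)"
  by (rule eq_matI) auto

lemma not_nonid_self:
  assumes sp: "fst sp = 1 \<or> fst sp = -1" "length (snd sp) = n" "snd sp \<noteq> replicate n PI"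
    and Q: "length Q = n"
  shows "\<not> nonid_step (signed_pauli_mat sp) Q Q"
proof
  let ?P = "signed_pauli_mat sp" and ?N = "2^n :: nat"
  assume "nonid_step ?P Q Q"
  then obtain s :: real where s: "s = 1 \<or> s = -1" and e: "?P * pauli_mat Q = complex_of_real s \<cdot>\<^sub>m pauli_mat Q"
    unfolding nonid_step_def by blast
  have P: "?P \<in> carrier_mat ?N ?N" using signed_carrier[of sp] sp by simp
  have PQ: "pauli_mat Q \<in> carrier_mat ?N ?N" using pm_carrier[of Q] Q by simp
  have "?P * pauli_mat Q * pauli_mat Q = ?P * (pauli_mat Q * pauli_mat Q)"
    using P PQ by (simp add: assoc_mult_mat[of _ ?N ?N])
  also have "\<dots> = ?P" using pm_sq[of Q] Q P by simp
  finally have "?P = (complex_of_real s \<cdot>\<^sub>m pauli_mat Q) * pauli_mat Q" using e by simp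
  also have "\<dots> = complex_of_real s \<cdot>\<^sub>m (pauli_mat Q * pauli_mat Q)"
    using PQ by (simp add: mult_smult_assoc_mat[of _ ?N ?N])
  also have "\<dots> = complex_of_real s \<cdot>\<^sub>m 1\<^sub>m ?N" using pm_sq[of Q] Q by simp
  finally have eq: "complex_of_real (fst sp) \<cdot>\<^sub>m pauli_mat (snd sp) = complex_of_real s \<cdot>\<^sub>m 1\<^sub>m ?N"
    by (simp add: signed_pauli_mat_def)
  have "mtr (complex_of_real (fst sp) \<cdot>\<^sub>m pauli_mat (snd sp)) = 0"
    using sp mtr_smult[OF pm_carrier[of "snd sp"]] pm_trace[of "snd sp"] by simp
  moreover have "mtr (complex_of_real s \<cdot>\<^sub>m 1\<^sub>m ?N) = complex_of_real s * of_nat ?N"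
    using mtr_smult[OF one_carrier_mat] mtr_one by simp
  ultimately have "complex_of_real s * of_nat ?N = 0" using eq by simp
  then show False using s by simp
qed

lemma step_struct:
  assumes sp: "fst sp = 1 \<or> fst sp = -1" "length (snd sp) = n" "snd sp \<noteq> replicate n PI"
    and Q: "length Q = n"
  defines "P \<equiv> signed_pauli_mat sp"
  shows "(Vs n P Q = {Q} \<and> step_factor \<tau> P Q Q = 1 \<and> \<not> nonid_step P Q Q \<and> chan \<tau> P (pauli_mat Q) = pauli_mat Q)
    \<or> (\<exists>W s. (s = 1 \<or> s = -1) \<and> length W = n \<and> W \<noteq> Q \<and> Vs n P Q = {Q, W}
        \<and> step_factor \<tau> P Q Q = cosh \<tau> \<and> step_factor \<tau> P Q W = - s * sinh \<tau>
        \<and> nonid_step P Q W \<and> \<not> nonid_step P Q Q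
        \<and> chan \<tau> P (pauli_mat Q) = complex_of_real (cosh \<tau>) \<cdot>\<^sub>m pauli_mat Q + complex_of_real (- s * sinh \<tau>) \<cdot>\<^sub>m pauli_mat W)"
proof -
  let ?N = "2^n :: nat"
  have len: "length (snd sp) = length Q" using sp Q by simp
  have nn: "\<not> nonid_step P Q Q" unfolding P_def by (rule not_nonid_self[OF sp Q])
  have Pc: "P \<in> carrier_mat ?N ?N" using signed_carrier[of sp] sp by (simp add: P_def)
  have Psq: "P * P = 1\<^sub>m ?N" using signed_sq[of sp] sp by (simp add: P_def)
  have Qc: "pauli_mat Q \<in> carrier_mat ?N ?N" using pm_carrier[of Q] Q by simp
  from step_cases[OF sp(1) len, folded P_def]
  show ?thesis
  proof
    assume "anticommutes P (pauli_mat Q) \<and> \<not> commutes P (pauli_mat Q)"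
    then have an: "anticommutes P (pauli_mat Q)" and nc: "\<not> commutes P (pauli_mat Q)" by auto
    have "Vs n P Q = {Q}"
      using nc Q an unfolding Vs_def valid_step_def nonid_step_def by auto
    moreover have "step_factor \<tau> P Q Q = 1" using nn nc by (simp add: step_factor_def)
    moreover have "chan \<tau> P (pauli_mat Q) = pauli_mat Q"
      using chan_anti[OF Pc Psq Qc] an by (simp add: anticommutes_def)
    ultimately show ?thesis using nn by blast
  next
    assume "commutes P (pauli_mat Q) \<and> \<not> anticommutes P (pauli_mat Q)
      \<and> (\<exists>s::real. (s = 1 \<or> s = -1) \<and> P * pauli_mat Q = complex_of_real s \<cdot>\<^sub>m pauli_mat (map2 pmul (snd sp) Q))"
    then obtain s :: real where cm: "commutes P (pauli_mat Q)" and s: "s = 1 \<or> s = -1"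
      and PQ: "P * pauli_mat Q = complex_of_real s \<cdot>\<^sub>m pauli_mat (map2 pmul (snd sp) Q)" by blast
    define W where "W = map2 pmul (snd sp) Q"
    have lW: "length W = n" using len Q by (simp add: W_def)
    have nW: "nonid_step P Q W" using cm s PQ unfolding nonid_step_def W_def by blast
    have WQ: "W \<noteq> Q" using nW nn by blast
    have uniq: "Q' = W" if "nonid_step P Q Q'" "length Q' = n" for Q'
    proof -
      from that obtain s' :: real where s': "s' = 1 \<or> s' = -1"
        and e: "P * pauli_mat Q = complex_of_real s' \<cdot>\<^sub>m pauli_mat Q'" unfolding nonid_step_def by blast
      have eqW: "complex_of_real s' \<cdot>\<^sub>m pauli_mat Q' = complex_of_real s \<cdot>\<^sub>m pauli_mat W"
        using e PQ by (simp add: W_def)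
      have "Q' = W \<and> complex_of_real s' = complex_of_real s"
        by (rule pm_smult_inj[OF _ _ eqW]) (use s' that(2) lW in auto)
      then show ?thesis by simp
    qed
    have V: "Vs n P Q = {Q, W}"
    proof (rule Set.set_eqI)
      fix Q' show "Q' \<in> Vs n P Q \<longleftrightarrow> Q' \<in> {Q, W}"
      proof
        assume "Q' \<in> Vs n P Q"
        then have l: "length Q' = n" and v: "valid_step P Q Q'" by (simp_all add: Vs_def)
        from v have "Q' = Q \<or> nonid_step P Q Q'" unfolding valid_step_def by blast
        then show "Q' \<in> {Q, W}" using uniq l by blast
      next
        assume "Q' \<in> {Q, W}"
        then show "Q' \<in> Vs n P Q" using cm nW lW Q unfolding Vs_def valid_step_def by blast
      qed
    qed
    have sfQ: "step_factor \<tau> P Q Q = cosh \<tau>" using nn cm by (simp add: step_factor_def)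
    have the_s: "(THE s'::real. (s' = 1 \<or> s' = -1) \<and> P * pauli_mat Q = complex_of_real s' \<cdot>\<^sub>m pauli_mat W) = s"
    proof (rule the_equality)
      show "(s = 1 \<or> s = -1) \<and> P * pauli_mat Q = complex_of_real s \<cdot>\<^sub>m pauli_mat W" using s PQ by (simp add: W_def)
    next
      fix s' :: real assume "(s' = 1 \<or> s' = -1) \<and> P * pauli_mat Q = complex_of_real s' \<cdot>\<^sub>m pauli_mat W"
      then have "complex_of_real s' \<cdot>\<^sub>m pauli_mat W = complex_of_real s \<cdot>\<^sub>m pauli_mat W" using PQ by (simp add: W_def)
      then have "complex_of_real s' = complex_of_real s" by (rule pm_smult_cancel)
      then show "s' = s" by simp
    qed
    have sfW: "step_factor \<tau> P Q W = - s * sinh \<tau>" using nW by (simp add: step_factor_def the_s)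
    have "chan \<tau> P (pauli_mat Q) = complex_of_real (cosh \<tau>) \<cdot>\<^sub>m pauli_mat Q + complex_of_real (- sinh \<tau>) \<cdot>\<^sub>m (P * pauli_mat Q)"
      using chan_comm[OF Pc Psq Qc] cm by (simp add: commutes_def)
    also have "\<dots> = complex_of_real (cosh \<tau>) \<cdot>\<^sub>m pauli_mat Q + complex_of_real (- s * sinh \<tau>) \<cdot>\<^sub>m pauli_mat W"
      unfolding PQ W_def[symmetric] smult_smult_mat' by (simp add: mult.commute)
    finally show ?thesis using s lW WQ V sfQ sfW nW nn by blast
  qed
qed

lemma okPs_snoc: "okPs n (Ps @ [sp]) \<longleftrightarrow> okPs n Ps \<and> (fst sp = 1 \<or> fst sp = -1) \<and> length (snd sp) = n \<and> snd sp \<noteq> replicate n PI"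
  by (auto simp: okPs_def)

lemma paths_length: "\<gamma> \<in> pauli_paths n Ps \<Longrightarrow> length \<gamma> = Suc (length Ps)"
  by (simp add: pauli_paths_def)

lemma paths_last_len:
  assumes "\<gamma> \<in> pauli_paths n Ps" shows "length (last \<gamma>) = n"
proof -
  have ne: "\<gamma> \<noteq> []" using paths_length[OF assms] by auto
  have "\<forall>Q\<in>set \<gamma>. length Q = n" using assms by (simp add: pauli_paths_def)
  then show ?thesis using last_in_set[OF ne] by blast
qed

lemma paths_Nil: "pauli_paths n [] = {[replicate n PI]}"
proof (rule Set.set_eqI)
  fix \<gamma> :: "pauli list list"
  show "\<gamma> \<in> pauli_paths n [] \<longleftrightarrow> \<gamma> \<in> {[replicate n PI]}"
  proof
    assume "\<gamma> \<in> pauli_paths n []"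
    then have "length \<gamma> = 1" "\<gamma> ! 0 = replicate n PI" by (simp_all add: pauli_paths_def)
    then show "\<gamma> \<in> {[replicate n PI]}" by (cases \<gamma>) auto
  next
    assume "\<gamma> \<in> {[replicate n PI]}"
    then show "\<gamma> \<in> pauli_paths n []" by (simp add: pauli_paths_def)
  qed
qed

lemma ball_Suc: "(\<forall>t\<in>{1..Suc L}. f t) \<longleftrightarrow> (\<forall>t\<in>{1..L}. f t) \<and> f (Suc L)"
proof -
  have "{1..Suc L} = insert (Suc L) {1..L}" by auto
  then show ?thesis by auto
qed

lemma pauli_in4: "(x::pauli) \<in> {PI, PX, PY, PZ}"
  by (cases x) auto

lemma snoc_idx:
  assumes "length \<gamma> = Suc (length Ps)" "t \<in> {1..length Ps}"
  shows "(Ps @ [sp]) ! (t - 1) = Ps ! (t - 1)" "(\<gamma> @ [Q]) ! (t - 1) = \<gamma> ! (t - 1)" "(\<gamma> @ [Q]) ! t = \<gamma> ! t"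
  using assms by (auto simp: nth_append)

lemma snoc_last_idx:
  assumes "length \<gamma> = Suc (length Ps)"
  shows "(Ps @ [sp]) ! (Suc (length Ps) - 1) = sp" "(\<gamma> @ [Q]) ! (Suc (length Ps) - 1) = last \<gamma>"
    "(\<gamma> @ [Q]) ! Suc (length Ps) = Q"
proof -
  have ne: "\<gamma> \<noteq> []" using assms by auto
  show "(Ps @ [sp]) ! (Suc (length Ps) - 1) = sp" by simp
  show "(\<gamma> @ [Q]) ! (Suc (length Ps) - 1) = last \<gamma>"
    using assms last_conv_nth[OF ne] by (simp add: nth_append)
  show "(\<gamma> @ [Q]) ! Suc (length Ps) = Q" using assms by (simp add: nth_append)
qed

lemma paths_snoc_iff:
  assumes len: "length \<gamma> = Suc (length Ps)"
  shows "\<gamma> @ [Q] \<in> pauli_paths n (Ps @ [sp]) \<longleftrightarrow>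
     \<gamma> \<in> pauli_paths n Ps \<and> Q \<in> Vs n (signed_pauli_mat sp) (last \<gamma>)"
proof -
  have steps: "(\<forall>t\<in>{1..length (Ps @ [sp])}. valid_step (signed_pauli_mat ((Ps @ [sp]) ! (t - 1))) ((\<gamma> @ [Q]) ! (t - 1)) ((\<gamma> @ [Q]) ! t))
     \<longleftrightarrow> (\<forall>t\<in>{1..length Ps}. valid_step (signed_pauli_mat (Ps ! (t - 1))) (\<gamma> ! (t - 1)) (\<gamma> ! t))
         \<and> valid_step (signed_pauli_mat sp) (last \<gamma>) Q"
    unfolding length_append list.size add_0 add_Suc_right ball_Suc
    using snoc_last_idx[OF len] len by (auto simp: nth_append)
  have z: "(\<gamma> @ [Q]) ! 0 = \<gamma> ! 0" using len by (simp add: nth_append)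
  show ?thesis
    unfolding pauli_paths_def Vs_def mem_Collect_eq steps z using len by auto
qed

lemma paths_snoc:
  "pauli_paths n (Ps @ [sp]) = (\<lambda>(\<gamma>, Q). \<gamma> @ [Q]) ` (SIGMA \<gamma>:pauli_paths n Ps. Vs n (signed_pauli_mat sp) (last \<gamma>))"
proof (rule Set.set_eqI)
  fix \<gamma>' show "\<gamma>' \<in> pauli_paths n (Ps @ [sp]) \<longleftrightarrow> \<gamma>' \<in> (\<lambda>(\<gamma>, Q). \<gamma> @ [Q]) ` (SIGMA \<gamma>:pauli_paths n Ps. Vs n (signed_pauli_mat sp) (last \<gamma>))"
  proof
    assume a: "\<gamma>' \<in> pauli_paths n (Ps @ [sp])"
    then have l: "length \<gamma>' = Suc (Suc (length Ps))" by (simp add: pauli_paths_def)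
    then have ne: "\<gamma>' \<noteq> []" by auto
    have e: "\<gamma>' = butlast \<gamma>' @ [last \<gamma>']" using ne by simp
    have lb: "length (butlast \<gamma>') = Suc (length Ps)" using l by simp
    have "butlast \<gamma>' \<in> pauli_paths n Ps \<and> last \<gamma>' \<in> Vs n (signed_pauli_mat sp) (last (butlast \<gamma>'))"
      using paths_snoc_iff[OF lb, of "last \<gamma>'" n sp] a e by simp
    then show "\<gamma>' \<in> (\<lambda>(\<gamma>, Q). \<gamma> @ [Q]) ` (SIGMA \<gamma>:pauli_paths n Ps. Vs n (signed_pauli_mat sp) (last \<gamma>))"
      using e by (intro image_eqI[of _ _ "(butlast \<gamma>', last \<gamma>')"]) auto
  next
    assume "\<gamma>' \<in> (\<lambda>(\<gamma>, Q). \<gamma> @ [Q]) ` (SIGMA \<gamma>:pauli_paths n Ps. Vs n (signed_pauli_mat sp) (last \<gamma>))"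
    then obtain \<gamma> Q where g: "\<gamma>' = \<gamma> @ [Q]" "\<gamma> \<in> pauli_paths n Ps" "Q \<in> Vs n (signed_pauli_mat sp) (last \<gamma>)" by auto
    then show "\<gamma>' \<in> pauli_paths n (Ps @ [sp])"
      using paths_snoc_iff[OF paths_length[OF g(2)]] by simp
  qed
qed

lemma coef_snoc:
  assumes len: "length \<gamma> = Suc (length Ps)"
  shows "path_coef \<tau> (Ps @ [sp]) (\<gamma> @ [Q]) = path_coef \<tau> Ps \<gamma> * step_factor \<tau> (signed_pauli_mat sp) (last \<gamma>) Q"
proof -
  have "path_coef \<tau> (Ps @ [sp]) (\<gamma> @ [Q]) = (\<Prod>t\<in>{1..Suc (length Ps)}.
      step_factor \<tau> (signed_pauli_mat ((Ps @ [sp]) ! (t - 1))) ((\<gamma> @ [Q]) ! (t - 1)) ((\<gamma> @ [Q]) ! t))"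
    by (simp add: path_coef_def)
  also have "\<dots> = (\<Prod>t\<in>{1..length Ps}.
      step_factor \<tau> (signed_pauli_mat ((Ps @ [sp]) ! (t - 1))) ((\<gamma> @ [Q]) ! (t - 1)) ((\<gamma> @ [Q]) ! t))
      * step_factor \<tau> (signed_pauli_mat ((Ps @ [sp]) ! (Suc (length Ps) - 1))) ((\<gamma> @ [Q]) ! (Suc (length Ps) - 1)) ((\<gamma> @ [Q]) ! Suc (length Ps))"
    by (simp add: prod.cl_ivl_Suc)
  also have "\<dots> = path_coef \<tau> Ps \<gamma> * step_factor \<tau> (signed_pauli_mat sp) (last \<gamma>) Q"
    unfolding path_coef_def snoc_last_idx[OF len]
    by (intro arg_cong2[where f="(*)"] prod.cong refl) (use len in \<open>auto simp: nth_append\<close>)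
  finally show ?thesis .
qed

lemma r_snoc:
  assumes len: "length \<gamma> = Suc (length Ps)"
  shows "path_r (Ps @ [sp]) (\<gamma> @ [Q]) = path_r Ps \<gamma> + (if nonid_step (signed_pauli_mat sp) (last \<gamma>) Q then 1 else 0)"
proof -
  let ?f = "\<lambda>t. nonid_step (signed_pauli_mat ((Ps @ [sp]) ! (t - 1))) ((\<gamma> @ [Q]) ! (t - 1)) ((\<gamma> @ [Q]) ! t)"
  let ?g = "\<lambda>t. nonid_step (signed_pauli_mat (Ps ! (t - 1))) (\<gamma> ! (t - 1)) (\<gamma> ! t)"
  have A: "{t\<in>{1..length Ps}. ?f t} = {t\<in>{1..length Ps}. ?g t}"
    using len by (auto simp: nth_append)
  have B: "?f (Suc (length Ps)) = nonid_step (signed_pauli_mat sp) (last \<gamma>) Q"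
    unfolding snoc_last_idx[OF len] ..
  have S: "{t\<in>{1..Suc (length Ps)}. ?f t} = {t\<in>{1..length Ps}. ?f t} \<union> (if ?f (Suc (length Ps)) then {Suc (length Ps)} else {})"
    by (auto simp: le_Suc_eq)
  have "path_r (Ps @ [sp]) (\<gamma> @ [Q]) = card {t\<in>{1..Suc (length Ps)}. ?f t}"
    by (simp add: path_r_def)
  also have "\<dots> = card {t\<in>{1..length Ps}. ?f t} + (if ?f (Suc (length Ps)) then 1 else 0)"
    unfolding S by (subst card_Un_disjoint) auto
  finally show ?thesis unfolding A B path_r_def by simp
qed

lemma finite_paths: "finite (pauli_paths n Ps)"
proof -
  let ?A = "{Q. set Q \<subseteq> {PI, PX, PY, PZ} \<and> length Q = n}"
  have fA: "finite ?A" by (rule finite_lists_length_eq) simp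
  have all: "set Q \<subseteq> {PI, PX, PY, PZ}" for Q
  proof
    fix x assume "x \<in> set Q" show "x \<in> {PI, PX, PY, PZ}" by (rule pauli_in4)
  qed
  have "pauli_paths n Ps \<subseteq> {\<gamma>. set \<gamma> \<subseteq> ?A \<and> length \<gamma> = Suc (length Ps)}"
  proof (rule subsetI)
    fix \<gamma> assume g: "\<gamma> \<in> pauli_paths n Ps"
    then have l: "length \<gamma> = Suc (length Ps)" and a: "\<forall>Q\<in>set \<gamma>. length Q = n"
      by (simp_all add: pauli_paths_def)
    have "set \<gamma> \<subseteq> ?A"
    proof
      fix Q assume "Q \<in> set \<gamma>"
      then show "Q \<in> ?A" using a all[of Q] by simp
    qed
    then show "\<gamma> \<in> {\<gamma>. set \<gamma> \<subseteq> ?A \<and> length \<gamma> = Suc (length Ps)}" using l by simp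
  qed
  moreover have "finite {\<gamma>. set \<gamma> \<subseteq> ?A \<and> length \<gamma> = Suc (length Ps)}"
    by (rule finite_lists_length_eq[OF fA])
  ultimately show ?thesis by (rule finite_subset)
qed

lemma finite_Vs:
  assumes sp: "fst sp = 1 \<or> fst sp = -1" "length (snd sp) = n" "snd sp \<noteq> replicate n PI"
    and Q: "length Q = n"
  shows "finite (Vs n (signed_pauli_mat sp) Q)"
proof (cases "Vs n (signed_pauli_mat sp) Q = {Q}")
  case True then show ?thesis by simp
next
  case False
  then obtain W where "Vs n (signed_pauli_mat sp) Q = {Q, W}" using step_struct[OF sp Q, of 0] by blast
  then show ?thesis by simp
qed

lemma chan_entry:
  assumes sp: "fst sp = 1 \<or> fst sp = -1" "length (snd sp) = n" "snd sp \<noteq> replicate n PI"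
    and Q: "length Q = n" and i: "i < 2^n" and j: "j < 2^n"
  shows "chan \<tau> (signed_pauli_mat sp) (pauli_mat Q) $$ (i,j) =
    (\<Sum>Q'\<in>Vs n (signed_pauli_mat sp) Q. complex_of_real (step_factor \<tau> (signed_pauli_mat sp) Q Q') * pauli_mat Q' $$ (i,j))"
  using step_struct[OF sp Q, of \<tau>]
proof
  assume "Vs n (signed_pauli_mat sp) Q = {Q} \<and> step_factor \<tau> (signed_pauli_mat sp) Q Q = 1 \<and>
      \<not> nonid_step (signed_pauli_mat sp) Q Q \<and> chan \<tau> (signed_pauli_mat sp) (pauli_mat Q) = pauli_mat Q"
  then show ?thesis by simp
next
  assume "\<exists>W s. (s = 1 \<or> s = -1) \<and> length W = n \<and> W \<noteq> Q \<and> Vs n (signed_pauli_mat sp) Q = {Q, W}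
        \<and> step_factor \<tau> (signed_pauli_mat sp) Q Q = cosh \<tau> \<and> step_factor \<tau> (signed_pauli_mat sp) Q W = - s * sinh \<tau>
        \<and> nonid_step (signed_pauli_mat sp) Q W \<and> \<not> nonid_step (signed_pauli_mat sp) Q Q
        \<and> chan \<tau> (signed_pauli_mat sp) (pauli_mat Q) = complex_of_real (cosh \<tau>) \<cdot>\<^sub>m pauli_mat Q + complex_of_real (- s * sinh \<tau>) \<cdot>\<^sub>m pauli_mat W"
  then obtain W s where W: "length W = n" "W \<noteq> Q" "Vs n (signed_pauli_mat sp) Q = {Q, W}"
    "step_factor \<tau> (signed_pauli_mat sp) Q Q = cosh \<tau>" "step_factor \<tau> (signed_pauli_mat sp) Q W = - s * sinh \<tau>"
    "chan \<tau> (signed_pauli_mat sp) (pauli_mat Q) = complex_of_real (cosh \<tau>) \<cdot>\<^sub>m pauli_mat Q + complex_of_real (- s * sinh \<tau>) \<cdot>\<^sub>m pauli_mat W"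
    by blast
  show ?thesis unfolding W(3) W(6) using W(1,2,4,5) Q i j by simp
qed

lemma expansion:
  assumes "okPs n Ps"
  shows "A_op n \<tau> Ps = msum (2^n) (pauli_paths n Ps) (\<lambda>\<gamma>. complex_of_real (path_coef \<tau> Ps \<gamma>) \<cdot>\<^sub>m pauli_mat (last \<gamma>))"
  using assms
proof (induction Ps rule: rev_induct)
  case Nil
  show ?case
  proof (rule eq_matI)
    fix i j assume "i < dim_row (msum (2^n) (pauli_paths n []) (\<lambda>\<gamma>. complex_of_real (path_coef \<tau> [] \<gamma>) \<cdot>\<^sub>m pauli_mat (last \<gamma>)))"
      "j < dim_col (msum (2^n) (pauli_paths n []) (\<lambda>\<gamma>. complex_of_real (path_coef \<tau> [] \<gamma>) \<cdot>\<^sub>m pauli_mat (last \<gamma>)))"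
    then have i: "i < 2^n" and j: "j < 2^n" by (auto simp: msum_def)
    show "A_op n \<tau> [] $$ (i,j) = msum (2^n) (pauli_paths n []) (\<lambda>\<gamma>. complex_of_real (path_coef \<tau> [] \<gamma>) \<cdot>\<^sub>m pauli_mat (last \<gamma>)) $$ (i,j)"
      using i j by (simp add: A_op_def msum_def paths_Nil path_coef_def pm_replicate)
  qed (auto simp: A_op_def msum_def)
next
  case (snoc sp Ps)
  let ?N = "2^n :: nat"
  let ?P = "signed_pauli_mat sp"
  let ?G = "pauli_paths n Ps"
  from snoc.prems have ok: "okPs n Ps" and sp: "fst sp = 1 \<or> fst sp = -1" "length (snd sp) = n" "snd sp \<noteq> replicate n PI"
    by (auto simp: okPs_snoc)
  have Pc: "?P \<in> carrier_mat ?N ?N" using signed_carrier[of sp] sp by simp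
  have Fc: "complex_of_real (path_coef \<tau> Ps \<gamma>) \<cdot>\<^sub>m pauli_mat (last \<gamma>) \<in> carrier_mat ?N ?N" if "\<gamma> \<in> ?G" for \<gamma>
    using pm_carrier[of "last \<gamma>"] paths_last_len[OF that] by simp
  have "A_op n \<tau> (Ps @ [sp]) = chan \<tau> ?P (A_op n \<tau> Ps)"
    by (simp add: A_op_def)
  also have "\<dots> = chan \<tau> ?P (msum ?N ?G (\<lambda>\<gamma>. complex_of_real (path_coef \<tau> Ps \<gamma>) \<cdot>\<^sub>m pauli_mat (last \<gamma>)))"
    using snoc.IH[OF ok] by simp
  also have "\<dots> = msum ?N ?G (\<lambda>\<gamma>. chan \<tau> ?P (complex_of_real (path_coef \<tau> Ps \<gamma>) \<cdot>\<^sub>m pauli_mat (last \<gamma>)))"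
    by (rule chan_msum[OF Pc Fc])
  also have "\<dots> = msum ?N (pauli_paths n (Ps @ [sp])) (\<lambda>\<gamma>. complex_of_real (path_coef \<tau> (Ps @ [sp]) \<gamma>) \<cdot>\<^sub>m pauli_mat (last \<gamma>))"
  proof (rule eq_matI)
    fix i j assume "i < dim_row (msum ?N (pauli_paths n (Ps @ [sp])) (\<lambda>\<gamma>. complex_of_real (path_coef \<tau> (Ps @ [sp]) \<gamma>) \<cdot>\<^sub>m pauli_mat (last \<gamma>)))"
      "j < dim_col (msum ?N (pauli_paths n (Ps @ [sp])) (\<lambda>\<gamma>. complex_of_real (path_coef \<tau> (Ps @ [sp]) \<gamma>) \<cdot>\<^sub>m pauli_mat (last \<gamma>)))"
    then have i: "i < ?N" and j: "j < ?N" by (auto simp: msum_def)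
    let ?Sig = "SIGMA \<gamma>:?G. Vs n ?P (last \<gamma>)"
    have fin: "finite ?G" by (rule finite_paths)
    have finV: "\<And>\<gamma>. \<gamma> \<in> ?G \<Longrightarrow> finite (Vs n ?P (last \<gamma>))"
      using finite_Vs[OF sp] paths_last_len by blast
    have inj: "inj_on (\<lambda>(\<gamma>, Q). \<gamma> @ [Q]) ?Sig" by (auto simp: inj_on_def)
    have "(\<Sum>\<gamma>\<in>?G. chan \<tau> ?P (complex_of_real (path_coef \<tau> Ps \<gamma>) \<cdot>\<^sub>m pauli_mat (last \<gamma>)) $$ (i,j))
        = (\<Sum>\<gamma>\<in>?G. complex_of_real (path_coef \<tau> Ps \<gamma>) * chan \<tau> ?P (pauli_mat (last \<gamma>)) $$ (i,j))"
    proof (rule sum.cong[OF refl])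
      fix \<gamma> assume g: "\<gamma> \<in> ?G"
      have X: "pauli_mat (last \<gamma>) \<in> carrier_mat ?N ?N" using pm_carrier[of "last \<gamma>"] paths_last_len[OF g] by simp
      show "chan \<tau> ?P (complex_of_real (path_coef \<tau> Ps \<gamma>) \<cdot>\<^sub>m pauli_mat (last \<gamma>)) $$ (i,j)
          = complex_of_real (path_coef \<tau> Ps \<gamma>) * chan \<tau> ?P (pauli_mat (last \<gamma>)) $$ (i,j)"
        unfolding chan_smult[OF Pc X] using chan_carrier[OF Pc X, of \<tau>] i j by simp
    qed
    also have "\<dots> = (\<Sum>\<gamma>\<in>?G. \<Sum>Q\<in>Vs n ?P (last \<gamma>). complex_of_real (path_coef \<tau> Ps \<gamma>) *
          (complex_of_real (step_factor \<tau> ?P (last \<gamma>) Q) * pauli_mat Q $$ (i,j)))"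
    proof (rule sum.cong[OF refl])
      fix \<gamma> assume g: "\<gamma> \<in> ?G"
      show "complex_of_real (path_coef \<tau> Ps \<gamma>) * chan \<tau> ?P (pauli_mat (last \<gamma>)) $$ (i,j) =
        (\<Sum>Q\<in>Vs n ?P (last \<gamma>). complex_of_real (path_coef \<tau> Ps \<gamma>) *
          (complex_of_real (step_factor \<tau> ?P (last \<gamma>) Q) * pauli_mat Q $$ (i,j)))"
        using chan_entry[OF sp paths_last_len[OF g] i j, of \<tau>] by (simp add: sum_distrib_left)
    qed
    also have "\<dots> = (\<Sum>(\<gamma>, Q)\<in>?Sig. complex_of_real (path_coef \<tau> Ps \<gamma>) *
          (complex_of_real (step_factor \<tau> ?P (last \<gamma>) Q) * pauli_mat Q $$ (i,j)))"
      by (rule sum.Sigma[OF fin]) (use finV in blast)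
    also have "\<dots> = (\<Sum>(\<gamma>, Q)\<in>?Sig. complex_of_real (path_coef \<tau> (Ps @ [sp]) (\<gamma> @ [Q])) * pauli_mat (last (\<gamma> @ [Q])) $$ (i,j))"
      by (intro sum.cong refl) (auto simp: coef_snoc[OF paths_length])
    also have "\<dots> = (\<Sum>\<gamma>'\<in>pauli_paths n (Ps @ [sp]). complex_of_real (path_coef \<tau> (Ps @ [sp]) \<gamma>') * pauli_mat (last \<gamma>') $$ (i,j))"
      unfolding paths_snoc sum.reindex[OF inj] by (simp add: case_prod_beta)
    finally show "msum ?N ?G (\<lambda>\<gamma>. chan \<tau> ?P (complex_of_real (path_coef \<tau> Ps \<gamma>) \<cdot>\<^sub>m pauli_mat (last \<gamma>))) $$ (i,j)
        = msum ?N (pauli_paths n (Ps @ [sp])) (\<lambda>\<gamma>. complex_of_real (path_coef \<tau> (Ps @ [sp]) \<gamma>) \<cdot>\<^sub>m pauli_mat (last \<gamma>)) $$ (i,j)"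
      using i j paths_last_len[of _ n "Ps @ [sp]"] by (simp add: msum_def)
  qed (auto simp: msum_def)
  finally show ?case .
qed

lemma cs_sum: fixes x :: "nat \<Rightarrow> real" shows "(\<Sum>i<N. x i)^2 \<le> real N * (\<Sum>i<N. (x i)^2)"
proof -
  have sq: "(\<Sum>i<N. x i)^2 = (\<Sum>i<N. \<Sum>j<N. x i * x j)" by (simp add: power2_eq_square sum_product)
  have "0 \<le> (\<Sum>i<N. \<Sum>j<N. (x i - x j)^2)" by (intro sum_nonneg) auto
  also have "\<dots> = (\<Sum>i<N. \<Sum>j<N. (x i)^2) + (\<Sum>i<N. \<Sum>j<N. (x j)^2) - 2 * (\<Sum>i<N. \<Sum>j<N. x i * x j)"
    by (simp add: power2_diff sum.distrib sum_subtractf sum_distrib_left mult.assoc)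
  also have "\<dots> = 2 * (real N * (\<Sum>i<N. (x i)^2)) - 2 * (\<Sum>i<N. x i)^2"
    unfolding sq by (simp add: sum_distrib_left)
  finally show ?thesis by simp
qed
lemma sqrt_sum_le:
  assumes "\<And>i. i < N \<Longrightarrow> 0 \<le> r i"
  shows "(\<Sum>i<N. sqrt (r i)) \<le> sqrt (real N * (\<Sum>i<N. r i))"
proof (rule real_le_rsqrt)
  have "(\<Sum>i<N. sqrt (r i))^2 \<le> real N * (\<Sum>i<N. (sqrt (r i))^2)" by (rule cs_sum)
  also have "(\<Sum>i<N. (sqrt (r i))^2) = (\<Sum>i<N. r i)" using assms by (intro sum.cong) auto
  finally show "(\<Sum>i<N. sqrt (r i))^2 \<le> real N * (\<Sum>i<N. r i)" .
qed

lemma adj_carrier: "M \<in> carrier_mat N N \<Longrightarrow> mat_adjoint M \<in> carrier_mat N N"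
  by (rule carrier_matI) (auto simp: mat_adjoint_def)

lemma adj_index: "M \<in> carrier_mat N N \<Longrightarrow> i < N \<Longrightarrow> j < N \<Longrightarrow> mat_adjoint M $$ (i,j) = cnj (M $$ (j,i))"
  by (simp add: mat_adjoint_def mat_of_rows_def)

lemma proots_lin: "proots (\<Prod>a\<leftarrow>ds. [:- a, 1:]) = mset (ds :: complex list)"
proof (induction ds)
  case Nil then show ?case by simp
next
  case (Cons a ds)
  let ?R = "\<Prod>a\<leftarrow>ds. [:- a, 1:]"
  have nz: "?R \<noteq> 0" by (auto simp: prod_list_zero_iff)
  have e: "(\<Prod>a\<leftarrow>a # ds. [:- a, 1:]) = [:- a, 1:] * ?R" by simp
  have "proots ([:- a, 1:] * ?R) = proots [:- a, 1:] + proots ?R"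
    by (rule proots_mult) (use nz in auto)
  then show ?case unfolding e using Cons by simp
qed

lemma cnj_mult_self: "cnj z * z = complex_of_real ((cmod z)^2)"
  using complex_norm_square[of z] by (simp add: mult.commute)
lemma mult_cnj_self: "z * cnj z = complex_of_real ((cmod z)^2)"
  using complex_norm_square[of z] by simp
lemma msum_upt: "sum_mset (image_mset g (mset (map f [0..<N]))) = (\<Sum>i<N. g (f i))"
proof -
  have "sum_mset (image_mset g (mset (map f [0..<N]))) = sum_list (map (g \<circ> f) [0..<N])"
    by (simp only: mset_map[symmetric] sum_mset_sum_list map_map)
  also have "\<dots> = (\<Sum>i<N. g (f i))"
    by (simp only: interv_sum_list_conv_sum_set_nat set_upt atLeast0LessThan o_def)
  finally show ?thesis .
qed
lemma mtr_comm:
  assumes X: "X \<in> carrier_mat n m" and Y: "Y \<in> carrier_mat m n"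
  shows "mtr (X * Y) = mtr (Y * X)"
proof -
  have "mtr (X * Y) = (\<Sum>i<n. (X * Y) $$ (i,i))" using X by (simp add: mtr_def)
  also have "\<dots> = (\<Sum>i<n. \<Sum>k<m. X $$ (i,k) * Y $$ (k,i))"
    by (intro sum.cong refl mult_index_sum[OF X Y]) auto
  also have "\<dots> = (\<Sum>k<m. \<Sum>i<n. Y $$ (k,i) * X $$ (i,k))" by (subst sum.swap) (simp add: mult.commute)
  also have "\<dots> = (\<Sum>k<m. (Y * X) $$ (k,k))"
    by (intro sum.cong refl mult_index_sum[OF Y X, symmetric]) auto
  also have "\<dots> = mtr (Y * X)" using Y by (simp add: mtr_def)
  finally show ?thesis .
qed

lemma mtr_similar:
  assumes "similar_mat A B"
  shows "mtr A = mtr B"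
proof -
  from similar_matD[OF assms] obtain n P Q where c: "{A,B,P,Q} \<subseteq> carrier_mat n n"
    and PQ: "P * Q = 1\<^sub>m n" and QP: "Q * P = 1\<^sub>m n" and A: "A = P * B * Q" by blast
  from c have Pc: "P \<in> carrier_mat n n" and Bc: "B \<in> carrier_mat n n" and Qc: "Q \<in> carrier_mat n n" by auto
  have "mtr A = mtr (P * (B * Q))" using A Pc Bc Qc by (simp add: assoc_mult_mat[of _ n n])
  also have "\<dots> = mtr ((B * Q) * P)" by (rule mtr_comm[OF Pc]) (use Bc Qc in auto)
  also have "\<dots> = mtr (B * (Q * P))" using Pc Bc Qc by (simp add: assoc_mult_mat[of _ n n])
  also have "\<dots> = mtr B" using QP Bc by simp
  finally show ?thesis .
qed

lemma psd_eig:
  assumes M: "M \<in> carrier_mat N N" and ev: "eigenvector (mat_adjoint M * M) v \<mu>"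
  shows "0 \<le> Re \<mu>"
proof -
  let ?A = "mat_adjoint M * M"
  have Ac: "?A \<in> carrier_mat N N" using adj_carrier[OF M] M by simp
  from ev have v: "v \<in> carrier_vec N" and nz: "v \<noteq> 0\<^sub>v N" and e: "?A *\<^sub>v v = \<mu> \<cdot>\<^sub>v v"
    unfolding eigenvector_def using Ac by auto
  define w where "w = M *\<^sub>v v"
  have w: "w \<in> carrier_vec N" using M v by (simp add: w_def)
  have Av: "?A *\<^sub>v v = mat_adjoint M *\<^sub>v w"
    unfolding w_def using adj_carrier[OF M] M v by (simp add: assoc_mult_mat_vec[of _ N N _ N])
  have wi: "w $ k = (\<Sum>i<N. M $$ (k,i) * v $ i)" if "k < N" for k
    using that M v by (simp add: w_def scalar_prod_def atLeast0LessThan)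
  have Ai: "(?A *\<^sub>v v) $ i = (\<Sum>k<N. cnj (M $$ (k,i)) * w $ k)" if "i < N" for i
    unfolding Av using that adj_carrier[OF M] w
    by (simp add: scalar_prod_def atLeast0LessThan adj_index[OF M])
  define S where "S = (\<Sum>i<N. cnj (v $ i) * (?A *\<^sub>v v) $ i)"
  have S1: "S = \<mu> * complex_of_real (\<Sum>i<N. (cmod (v $ i))^2)"
  proof -
    have "S = (\<Sum>i<N. \<mu> * (cnj (v $ i) * v $ i))" unfolding S_def e using v by (intro sum.cong refl) auto
    also have "\<dots> = \<mu> * (\<Sum>i<N. complex_of_real ((cmod (v $ i))^2))"
      by (simp only: sum_distrib_left cnj_mult_self)
    finally show ?thesis by simp
  qed
  have S2: "S = complex_of_real (\<Sum>k<N. (cmod (w $ k))^2)"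
  proof -
    have "S = (\<Sum>i<N. \<Sum>k<N. cnj (v $ i) * (cnj (M $$ (k,i)) * w $ k))"
      unfolding S_def by (intro sum.cong refl) (simp add: Ai sum_distrib_left)
    also have "\<dots> = (\<Sum>k<N. \<Sum>i<N. w $ k * cnj (M $$ (k,i) * v $ i))"
      by (subst sum.swap) (simp add: mult.commute mult.left_commute)
    also have "\<dots> = (\<Sum>k<N. w $ k * cnj (w $ k))"
      by (intro sum.cong refl) (simp add: wi sum_distrib_left)
    also have "\<dots> = (\<Sum>k<N. complex_of_real ((cmod (w $ k))^2))"
      by (simp only: mult_cnj_self)
    finally show ?thesis by simp
  qed
  obtain i where i: "i < N" "v $ i \<noteq> 0"
    using nz v by (metis carrier_vecD eq_vecI index_zero_vec(1) index_zero_vec(2))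
  have pos: "0 < (\<Sum>i<N. (cmod (v $ i))^2)"
  proof -
    have "(cmod (v $ i))^2 \<le> (\<Sum>i<N. (cmod (v $ i))^2)"
      using i by (intro member_le_sum) auto
    moreover have "0 < (cmod (v $ i))^2" using i by simp
    ultimately show ?thesis by linarith
  qed
  have "Re \<mu> * (\<Sum>i<N. (cmod (v $ i))^2) = (\<Sum>k<N. (cmod (w $ k))^2)"
    using arg_cong[OF trans[OF S1[symmetric] S2], of Re] by simp
  moreover have "0 \<le> (\<Sum>k<N. (cmod (w $ k))^2)" by (intro sum_nonneg) auto
  ultimately show ?thesis using pos by (metis not_le mult_neg_pos)
qed

lemma trace_norm_bound:
  assumes M: "M \<in> carrier_mat N N"
  shows "trace_norm M \<le> sqrt (real N * (\<Sum>i<N. \<Sum>j<N. (cmod (M $$ (i,j)))^2))"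
proof -
  let ?A = "mat_adjoint M * M"
  have Ac: "?A \<in> carrier_mat N N" using adj_carrier[OF M] M by simp
  obtain as where cp: "char_poly ?A = (\<Prod>a\<leftarrow>as. [:- a, 1:])" and las: "length as = N"
    using char_poly_factorized[OF Ac] by blast
  define B where "B = schur_upper_triangular ?A as"
  have Bc: "B \<in> carrier_mat N N" and ut: "upper_triangular B" and sim: "similar_mat ?A B"
    using schur_upper_triangular[OF Ac cp] unfolding B_def by auto
  have cpB: "char_poly ?A = (\<Prod>a\<leftarrow>diag_mat B. [:- a, 1:])"
    using char_poly_similar[OF sim] char_poly_upper_triangular[OF Bc ut] by simp
  have dB: "diag_mat B = map (\<lambda>i. B $$ (i,i)) [0..<N]" using Bc by (simp add: diag_mat_def)
  have tn: "trace_norm M = (\<Sum>i<N. sqrt (Re (B $$ (i,i))))"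
    unfolding trace_norm_def cpB proots_lin dB
    by (rule msum_upt)
  have nonneg: "0 \<le> Re (B $$ (i,i))" if "i < N" for i
  proof -
    have "B $$ (i,i) \<in> set (diag_mat B)" using that dB by auto
    then have "poly (char_poly ?A) (B $$ (i,i)) = 0" unfolding cpB by (rule linear_poly_root)
    then have "eigenvalue ?A (B $$ (i,i))" using eigenvalue_root_char_poly[OF Ac] by simp
    then obtain v where "eigenvector ?A v (B $$ (i,i))" unfolding eigenvalue_def by blast
    then show ?thesis by (rule psd_eig[OF M])
  qed
  have "trace_norm M \<le> sqrt (real N * (\<Sum>i<N. Re (B $$ (i,i))))"
    unfolding tn by (rule sqrt_sum_le) (rule nonneg)
  also have "(\<Sum>i<N. Re (B $$ (i,i))) = Re (mtr B)" using Bc by (simp add: mtr_def)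
  also have "\<dots> = Re (mtr ?A)" using mtr_similar[OF sim] by simp
  also have "mtr ?A = (\<Sum>i<N. ?A $$ (i,i))" using adj_carrier[OF M] by (simp add: mtr_def)
  also have "\<dots> = (\<Sum>i<N. \<Sum>k<N. mat_adjoint M $$ (i,k) * M $$ (k,i))"
    by (intro sum.cong refl mult_index_sum[OF adj_carrier[OF M] M]) auto
  also have "\<dots> = (\<Sum>i<N. \<Sum>k<N. complex_of_real ((cmod (M $$ (k,i)))^2))"
    by (intro sum.cong refl) (simp only: lessThan_iff adj_index[OF M] cnj_mult_self)
  also have "Re \<dots> = (\<Sum>i<N. \<Sum>k<N. (cmod (M $$ (k,i)))^2)"
    by (simp only: Re_sum Re_complex_of_real)
  also have "\<dots> = (\<Sum>i<N. \<Sum>j<N. (cmod (M $$ (i,j)))^2)"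
    by (rule sum.swap)
  finally show ?thesis .
qed

lemma frob:
  fixes c :: "'b \<Rightarrow> real" and Qf :: "'b \<Rightarrow> pauli list"
  assumes fin: "finite S" and len: "\<And>\<gamma>. \<gamma> \<in> S \<Longrightarrow> length (Qf \<gamma>) = n"
  shows "(\<Sum>i<2^n. \<Sum>j<2^n. (cmod (msum (2^n) S (\<lambda>\<gamma>. complex_of_real (c \<gamma>) \<cdot>\<^sub>m pauli_mat (Qf \<gamma>)) $$ (i,j)))^2)
     \<le> real (2^n) * (\<Sum>\<gamma>\<in>S. \<bar>c \<gamma>\<bar>)^2"
proof -
  let ?N = "2^n :: nat"
  let ?M = "msum (2^n) S (\<lambda>\<gamma>. complex_of_real (c \<gamma>) \<cdot>\<^sub>m pauli_mat (Qf \<gamma>))"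
  let ?C = "\<Sum>\<gamma>\<in>S. \<bar>c \<gamma>\<bar>"
  define a where "a i j = (\<Sum>\<gamma>\<in>S. \<bar>c \<gamma>\<bar> * cmod (pauli_mat (Qf \<gamma>) $$ (i,j)))" for i j
  have Mij: "?M $$ (i,j) = (\<Sum>\<gamma>\<in>S. complex_of_real (c \<gamma>) * pauli_mat (Qf \<gamma>) $$ (i,j))" if "i < ?N" "j < ?N" for i j
    using that len by (simp add: msum_def)
  have a0: "0 \<le> a i j" for i j unfolding a_def by (intro sum_nonneg) auto
  have h1: "cmod (?M $$ (i,j)) \<le> a i j" if "i < ?N" "j < ?N" for i j
    unfolding Mij[OF that] a_def by (rule sum_norm_le) (simp add: norm_mult)
  have h2: "a i j \<le> ?C" if "i < ?N" "j < ?N" for i j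
    unfolding a_def
  proof (rule sum_mono)
    fix \<gamma> assume g: "\<gamma> \<in> S"
    have "cmod (pauli_mat (Qf \<gamma>) $$ (i,j)) \<le> 1" using pm_entry_le[of i "Qf \<gamma>" j] that len[OF g] by simp
    then show "\<bar>c \<gamma>\<bar> * cmod (pauli_mat (Qf \<gamma>) $$ (i,j)) \<le> \<bar>c \<gamma>\<bar>"
      by (simp add: mult_left_le)
  qed
  have h3: "(cmod (?M $$ (i,j)))^2 \<le> ?C * a i j" if "i < ?N" "j < ?N" for i j
  proof -
    have "(cmod (?M $$ (i,j)))^2 \<le> (a i j)^2" using h1[OF that] by (intro power_mono) auto
    also have "\<dots> = a i j * a i j" by (simp add: power2_eq_square)
    also have "\<dots> \<le> ?C * a i j" using h2[OF that] a0 by (intro mult_right_mono) auto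
    finally show ?thesis .
  qed
  have h4: "(\<Sum>j<?N. a i j) = ?C" if "i < ?N" for i
  proof -
    have "(\<Sum>j<?N. a i j) = (\<Sum>\<gamma>\<in>S. \<bar>c \<gamma>\<bar> * (\<Sum>j<?N. cmod (pauli_mat (Qf \<gamma>) $$ (i,j))))"
      unfolding a_def by (subst sum.swap) (simp add: sum_distrib_left)
    also have "\<dots> = ?C"
    proof (rule sum.cong[OF refl])
      fix \<gamma> assume g: "\<gamma> \<in> S"
      show "\<bar>c \<gamma>\<bar> * (\<Sum>j<?N. cmod (pauli_mat (Qf \<gamma>) $$ (i,j))) = \<bar>c \<gamma>\<bar>"
        using pm_rowsum[of i "Qf \<gamma>"] that len[OF g] by simp
    qed
    finally show ?thesis .
  qed
  have "(\<Sum>i<?N. \<Sum>j<?N. (cmod (?M $$ (i,j)))^2) \<le> (\<Sum>i<?N. \<Sum>j<?N. ?C * a i j)"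
    by (intro sum_mono h3) auto
  also have "\<dots> = (\<Sum>i<?N. ?C * ?C)"
    by (intro sum.cong refl) (simp add: sum_distrib_left[symmetric] h4)
  also have "\<dots> = real ?N * ?C^2" by (simp add: power2_eq_square)
  finally show ?thesis .
qed

lemma cosh_le_exp: "0 \<le> (t::real) \<Longrightarrow> cosh t \<le> exp t"
  by (simp add: cosh_def)

lemma sinh_nonneg': "0 \<le> (t::real) \<Longrightarrow> 0 \<le> sinh t"
  by (simp add: sinh_def)

lemma sinh_le: "0 \<le> (t::real) \<Longrightarrow> sinh t \<le> t * exp t"
proof -
  assume t: "0 \<le> t"
  have "1 + (- 2 * t) \<le> exp (- 2 * t)" by (rule exp_ge_add_one_self)
  then have "exp t * (1 - 2 * t) \<le> exp t * exp (- 2 * t)" by (intro mult_left_mono) auto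
  also have "exp t * exp (- 2 * t) = exp (- t)" by (simp add: exp_add[symmetric])
  finally have "exp t - exp (- t) \<le> 2 * t * exp t" by (simp add: algebra_simps)
  then show ?thesis by (simp add: sinh_def)
qed

lemma step_bound:
  assumes sp: "fst sp = 1 \<or> fst sp = -1" "length (snd sp) = n" "snd sp \<noteq> replicate n PI"
    and Q: "length Q = n" and t: "0 \<le> \<tau>" and y: "0 \<le> y"
  shows "(\<Sum>Q'\<in>Vs n (signed_pauli_mat sp) Q. \<bar>step_factor \<tau> (signed_pauli_mat sp) Q Q'\<bar> *
      y ^ (if nonid_step (signed_pauli_mat sp) Q Q' then 1 else 0)) \<le> exp \<tau> * (1 + y * \<tau>)"
  using step_struct[OF sp Q, of \<tau>]
proof
  assume "Vs n (signed_pauli_mat sp) Q = {Q} \<and> step_factor \<tau> (signed_pauli_mat sp) Q Q = 1 \<and>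
      \<not> nonid_step (signed_pauli_mat sp) Q Q \<and> chan \<tau> (signed_pauli_mat sp) (pauli_mat Q) = pauli_mat Q"
  then have V: "Vs n (signed_pauli_mat sp) Q = {Q}" and f: "step_factor \<tau> (signed_pauli_mat sp) Q Q = 1"
    and nn: "\<not> nonid_step (signed_pauli_mat sp) Q Q" by auto
  have "(1::real) * 1 \<le> exp \<tau> * (1 + y * \<tau>)" using t y by (intro mult_mono) auto
  then show ?thesis unfolding V using f nn by simp
next
  assume "\<exists>W s. (s = 1 \<or> s = -1) \<and> length W = n \<and> W \<noteq> Q \<and> Vs n (signed_pauli_mat sp) Q = {Q, W}
        \<and> step_factor \<tau> (signed_pauli_mat sp) Q Q = cosh \<tau> \<and> step_factor \<tau> (signed_pauli_mat sp) Q W = - s * sinh \<tau>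
        \<and> nonid_step (signed_pauli_mat sp) Q W \<and> \<not> nonid_step (signed_pauli_mat sp) Q Q
        \<and> chan \<tau> (signed_pauli_mat sp) (pauli_mat Q) = complex_of_real (cosh \<tau>) \<cdot>\<^sub>m pauli_mat Q + complex_of_real (- s * sinh \<tau>) \<cdot>\<^sub>m pauli_mat W"
  then obtain W s where s: "s = 1 \<or> s = -1" and W: "W \<noteq> Q" "Vs n (signed_pauli_mat sp) Q = {Q, W}"
    "step_factor \<tau> (signed_pauli_mat sp) Q Q = cosh \<tau>" "step_factor \<tau> (signed_pauli_mat sp) Q W = - s * sinh \<tau>"
    "nonid_step (signed_pauli_mat sp) Q W" "\<not> nonid_step (signed_pauli_mat sp) Q Q"
    by blast
  have abs_s: "\<bar>- s * sinh \<tau>\<bar> = sinh \<tau>" using s sinh_nonneg'[OF t] by auto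
  have "(\<Sum>Q'\<in>Vs n (signed_pauli_mat sp) Q. \<bar>step_factor \<tau> (signed_pauli_mat sp) Q Q'\<bar> *
      y ^ (if nonid_step (signed_pauli_mat sp) Q Q' then 1 else 0)) = \<bar>cosh \<tau>\<bar> + sinh \<tau> * y"
    unfolding W(2) using W(1,3,4,5,6) abs_s by simp
  also have "\<dots> = cosh \<tau> + sinh \<tau> * y" by simp
  also have "\<dots> \<le> exp \<tau> + \<tau> * exp \<tau> * y"
    using cosh_le_exp[OF t] sinh_le[OF t] y by (intro add_mono mult_right_mono) auto
  also have "\<dots> = exp \<tau> * (1 + y * \<tau>)" by (simp add: algebra_simps)
  finally show ?thesis .
qed

lemma weighted_sum:
  assumes "okPs n Ps" and t: "0 \<le> \<tau>" and y: "0 \<le> y"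
  shows "(\<Sum>\<gamma>\<in>pauli_paths n Ps. \<bar>path_coef \<tau> Ps \<gamma>\<bar> * y ^ path_r Ps \<gamma>) \<le> (exp \<tau> * (1 + y * \<tau>)) ^ length Ps"
  using assms(1)
proof (induction Ps rule: rev_induct)
  case Nil
  show ?case by (simp add: paths_Nil path_coef_def path_r_def)
next
  case (snoc sp Ps)
  let ?P = "signed_pauli_mat sp"
  let ?G = "pauli_paths n Ps"
  let ?B = "exp \<tau> * (1 + y * \<tau>)"
  let ?Sig = "SIGMA \<gamma>:?G. Vs n ?P (last \<gamma>)"
  from snoc.prems have ok: "okPs n Ps" and sp: "fst sp = 1 \<or> fst sp = -1" "length (snd sp) = n" "snd sp \<noteq> replicate n PI"
    by (auto simp: okPs_snoc)
  have fin: "finite ?G" by (rule finite_paths)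
  have finV: "\<And>\<gamma>. \<gamma> \<in> ?G \<Longrightarrow> finite (Vs n ?P (last \<gamma>))"
    using finite_Vs[OF sp] paths_last_len by blast
  have inj: "inj_on (\<lambda>(\<gamma>, Q). \<gamma> @ [Q]) ?Sig" by (auto simp: inj_on_def)
  have "(\<Sum>\<gamma>'\<in>pauli_paths n (Ps @ [sp]). \<bar>path_coef \<tau> (Ps @ [sp]) \<gamma>'\<bar> * y ^ path_r (Ps @ [sp]) \<gamma>')
      = (\<Sum>(\<gamma>, Q)\<in>?Sig. \<bar>path_coef \<tau> (Ps @ [sp]) (\<gamma> @ [Q])\<bar> * y ^ path_r (Ps @ [sp]) (\<gamma> @ [Q]))"
    unfolding paths_snoc sum.reindex[OF inj] by (simp add: case_prod_beta)
  also have "\<dots> = (\<Sum>(\<gamma>, Q)\<in>?Sig. (\<bar>path_coef \<tau> Ps \<gamma>\<bar> * y ^ path_r Ps \<gamma>) *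
      (\<bar>step_factor \<tau> ?P (last \<gamma>) Q\<bar> * y ^ (if nonid_step ?P (last \<gamma>) Q then 1 else 0)))"
    by (intro sum.cong refl) (auto simp: coef_snoc[OF paths_length] r_snoc[OF paths_length] abs_mult power_add)
  also have "\<dots> = (\<Sum>\<gamma>\<in>?G. (\<bar>path_coef \<tau> Ps \<gamma>\<bar> * y ^ path_r Ps \<gamma>) *
      (\<Sum>Q\<in>Vs n ?P (last \<gamma>). \<bar>step_factor \<tau> ?P (last \<gamma>) Q\<bar> * y ^ (if nonid_step ?P (last \<gamma>) Q then 1 else 0)))"
    by (subst sum.Sigma[OF fin, symmetric]) (auto simp: finV sum_distrib_left)
  also have "\<dots> \<le> (\<Sum>\<gamma>\<in>?G. (\<bar>path_coef \<tau> Ps \<gamma>\<bar> * y ^ path_r Ps \<gamma>) * ?B)"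
  proof (rule sum_mono)
    fix \<gamma> assume g: "\<gamma> \<in> ?G"
    show "(\<bar>path_coef \<tau> Ps \<gamma>\<bar> * y ^ path_r Ps \<gamma>) *
      (\<Sum>Q\<in>Vs n ?P (last \<gamma>). \<bar>step_factor \<tau> ?P (last \<gamma>) Q\<bar> * y ^ (if nonid_step ?P (last \<gamma>) Q then 1 else 0))
      \<le> (\<bar>path_coef \<tau> Ps \<gamma>\<bar> * y ^ path_r Ps \<gamma>) * ?B"
      using step_bound[OF sp paths_last_len[OF g] t y] y by (intro mult_left_mono) auto
  qed
  also have "\<dots> = (\<Sum>\<gamma>\<in>?G. \<bar>path_coef \<tau> Ps \<gamma>\<bar> * y ^ path_r Ps \<gamma>) * ?B"
    by (simp add: sum_distrib_right)
  also have "\<dots> \<le> ?B ^ length Ps * ?B"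
    using snoc.IH[OF ok] t y by (intro mult_right_mono) auto
  also have "\<dots> = ?B ^ length (Ps @ [sp])" by simp
  finally show ?case .
qed

lemma tail_bound:
  assumes ok: "okPs n Ps" and t: "0 < \<tau>" and L: "1 \<le> length Ps"
    and kk: "real k > exp 1 * real (length Ps) * \<tau>"
  shows "(\<Sum>\<gamma>\<in>{\<gamma>\<in>pauli_paths n Ps. \<not> path_r Ps \<gamma> \<le> k}. \<bar>path_coef \<tau> Ps \<gamma>\<bar>)
     \<le> exp (\<tau> * real (length Ps)) * (exp 1 * real (length Ps) * \<tau> / real k) ^ k"
proof -
  let ?L = "length Ps"
  let ?G = "pauli_paths n Ps"
  define y where "y = real k / (real ?L * \<tau>)"
  have Lt: "0 < real ?L * \<tau>" using L t by (intro mult_pos_pos) auto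
  have e1: "1 \<le> exp (1::real)" by simp
  have "1 * (real ?L * \<tau>) \<le> exp 1 * (real ?L * \<tau>)" using Lt e1 by (intro mult_right_mono) auto
  then have "real ?L * \<tau> \<le> exp 1 * real ?L * \<tau>" by (simp add: mult.assoc)
  then have kL: "real ?L * \<tau> < real k" using kk by linarith
  have y1: "1 \<le> y" unfolding y_def using kL Lt by simp
  have y0: "0 < y" using y1 by simp
  have yk: "0 < y ^ k" using y0 by simp
  have "(\<Sum>\<gamma>\<in>{\<gamma>\<in>?G. \<not> path_r Ps \<gamma> \<le> k}. \<bar>path_coef \<tau> Ps \<gamma>\<bar>)
      \<le> (\<Sum>\<gamma>\<in>{\<gamma>\<in>?G. \<not> path_r Ps \<gamma> \<le> k}. \<bar>path_coef \<tau> Ps \<gamma>\<bar> * y ^ path_r Ps \<gamma> / y ^ k)"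
  proof (rule sum_mono)
    fix \<gamma> assume "\<gamma> \<in> {\<gamma>\<in>?G. \<not> path_r Ps \<gamma> \<le> k}"
    then have "k \<le> path_r Ps \<gamma>" by simp
    then have "y ^ k \<le> y ^ path_r Ps \<gamma>" using y1 by (rule power_increasing)
    then have "\<bar>path_coef \<tau> Ps \<gamma>\<bar> * y ^ k \<le> \<bar>path_coef \<tau> Ps \<gamma>\<bar> * y ^ path_r Ps \<gamma>"
      by (intro mult_left_mono) auto
    then show "\<bar>path_coef \<tau> Ps \<gamma>\<bar> \<le> \<bar>path_coef \<tau> Ps \<gamma>\<bar> * y ^ path_r Ps \<gamma> / y ^ k"
      using yk by (simp add: pos_le_divide_eq)
  qed
  also have "\<dots> \<le> (\<Sum>\<gamma>\<in>?G. \<bar>path_coef \<tau> Ps \<gamma>\<bar> * y ^ path_r Ps \<gamma> / y ^ k)"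
    by (rule sum_mono2[OF finite_paths]) (use y0 in auto)
  also have "\<dots> = (\<Sum>\<gamma>\<in>?G. \<bar>path_coef \<tau> Ps \<gamma>\<bar> * y ^ path_r Ps \<gamma>) / y ^ k"
    by (simp add: sum_divide_distrib)
  also have "\<dots> \<le> (exp \<tau> * (1 + y * \<tau>)) ^ ?L / y ^ k"
    using weighted_sum[OF ok _ , of \<tau> y] t y0 yk by (intro divide_right_mono) auto
  also have "(exp \<tau> * (1 + y * \<tau>)) ^ ?L = exp (\<tau> * real ?L) * (1 + real k / real ?L) ^ ?L"
  proof -
    have "y * \<tau> = real k / real ?L" unfolding y_def using t by simp
    moreover have "exp \<tau> ^ ?L = exp (\<tau> * real ?L)" by (simp add: exp_of_nat_mult[symmetric] mult.commute)
    ultimately show ?thesis by (simp add: power_mult_distrib)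
  qed
  also have "exp (\<tau> * real ?L) * (1 + real k / real ?L) ^ ?L / y ^ k \<le> exp (\<tau> * real ?L) * exp (real k) / y ^ k"
  proof -
    have "(1 + real k / real ?L) ^ ?L \<le> exp (real k)"
      by (rule exp_ge_one_plus_x_over_n_power_n) (use L in auto)
    then show ?thesis using yk by (intro divide_right_mono mult_left_mono) auto
  qed
  also have "exp (\<tau> * real ?L) * exp (real k) / y ^ k = exp (\<tau> * real ?L) * (exp 1 * real ?L * \<tau> / real k) ^ k"
  proof -
    have h1: "exp (real k) = exp 1 ^ k" by (simp add: exp_of_nat_mult[symmetric])
    have h2: "exp 1 / y = exp 1 * real ?L * \<tau> / real k" unfolding y_def using Lt kL by (simp add: field_simps)
    have "exp (\<tau> * real ?L) * exp (real k) / y ^ k = exp (\<tau> * real ?L) * (exp 1 ^ k / y ^ k)"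
      unfolding h1 by simp
    also have "\<dots> = exp (\<tau> * real ?L) * (exp 1 / y) ^ k" by (simp add: power_divide)
    also have "\<dots> = exp (\<tau> * real ?L) * (exp 1 * real ?L * \<tau> / real k) ^ k" unfolding h2 ..
    finally show ?thesis .
  qed
  finally show ?thesis .
qed

theorem mainTheorem7:
  fixes n L k :: nat and \<tau> :: real and Ps :: "(real \<times> pauli list) list"
  assumes "n \<ge> 1" and "\<tau> > 0" and "L \<ge> 1" and "length Ps = L"
    and "\<forall>sp\<in>set Ps. (fst sp = 1 \<or> fst sp = -1) \<and> length (snd sp) = n
                      \<and> snd sp \<noteq> replicate n PI"
    and "real k > exp 1 * real L * \<tau>"
  shows "trace_norm (A_op n \<tau> Ps - A_trunc n \<tau> Ps k)
           \<le> 2 ^ n * exp (\<tau> * real L) * (exp 1 * real L * \<tau> / real k) ^ k"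
proof -
  let ?N = "2^n :: nat"
  let ?G = "pauli_paths n Ps"
  let ?Gle = "{\<gamma>\<in>?G. path_r Ps \<gamma> \<le> k}"
  let ?Ggt = "{\<gamma>\<in>?G. \<not> path_r Ps \<gamma> \<le> k}"
  let ?F = "\<lambda>\<gamma>. complex_of_real (path_coef \<tau> Ps \<gamma>) \<cdot>\<^sub>m pauli_mat (last \<gamma>)"
  let ?C = "\<Sum>\<gamma>\<in>?Ggt. \<bar>path_coef \<tau> Ps \<gamma>\<bar>"
  have ok: "okPs n Ps" using assms(5) by (simp add: okPs_def)
  have fin: "finite ?G" by (rule finite_paths)
  have D: "A_op n \<tau> Ps - A_trunc n \<tau> Ps k = msum ?N ?Ggt ?F"
  proof (rule eq_matI)
    fix i j assume "i < dim_row (msum ?N ?Ggt ?F)" "j < dim_col (msum ?N ?Ggt ?F)"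
    then have i: "i < ?N" and j: "j < ?N" by (auto simp: msum_def)
    let ?f = "\<lambda>\<gamma>. complex_of_real (path_coef \<tau> Ps \<gamma>) * pauli_mat (last \<gamma>) $$ (i, j)"
    have fe: "?F \<gamma> $$ (i,j) = ?f \<gamma>" if "\<gamma> \<in> ?G" for \<gamma>
      using i j paths_last_len[OF that] by simp
    have A: "A_op n \<tau> Ps $$ (i,j) = (\<Sum>\<gamma>\<in>?G. ?f \<gamma>)"
      unfolding expansion[OF ok] using i j fe by (simp add: msum_def)
    have T: "A_trunc n \<tau> Ps k $$ (i,j) = (\<Sum>\<gamma>\<in>?Gle. ?f \<gamma>)"
      using i j by (simp add: A_trunc_def)
    have R: "msum ?N ?Ggt ?F $$ (i,j) = (\<Sum>\<gamma>\<in>?Ggt. ?f \<gamma>)"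
      using i j fe by (simp add: msum_def)
    have split: "?G = ?Gle \<union> ?Ggt" by auto
    have "(\<Sum>\<gamma>\<in>?G. ?f \<gamma>) = (\<Sum>\<gamma>\<in>?Gle. ?f \<gamma>) + (\<Sum>\<gamma>\<in>?Ggt. ?f \<gamma>)"
      by (subst split, rule sum.union_disjoint) (use fin in auto)
    then show "(A_op n \<tau> Ps - A_trunc n \<tau> Ps k) $$ (i,j) = msum ?N ?Ggt ?F $$ (i,j)"
      using i j A T R by (simp add: A_trunc_def)
  qed (auto simp: msum_def A_trunc_def)
  have "trace_norm (A_op n \<tau> Ps - A_trunc n \<tau> Ps k)
      \<le> sqrt (real ?N * (\<Sum>i<?N. \<Sum>j<?N. (cmod (msum ?N ?Ggt ?F $$ (i,j)))^2))"
    unfolding D by (rule trace_norm_bound[OF msum_carrier])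
  also have "\<dots> \<le> sqrt (real ?N * (real ?N * ?C^2))"
    using frob[of ?Ggt last n "path_coef \<tau> Ps"] fin paths_last_len by (intro real_sqrt_le_mono mult_left_mono) auto
  also have "\<dots> = real ?N * ?C"
  proof -
    have "real ?N * (real ?N * ?C^2) = (real ?N * ?C)^2" by (simp add: power2_eq_square)
    moreover have "0 \<le> real ?N * ?C" by (intro mult_nonneg_nonneg sum_nonneg) auto
    ultimately show ?thesis by simp
  qed
  also have "\<dots> \<le> real ?N * (exp (\<tau> * real L) * (exp 1 * real L * \<tau> / real k) ^ k)"
    using tail_bound[OF ok assms(2)] assms(3,4,6) by (intro mult_left_mono) auto
  also have "\<dots> = 2 ^ n * exp (\<tau> * real L) * (exp 1 * real L * \<tau> / real k) ^ k"
    by simp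
  finally show ?thesis .
qed

end
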